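(* Let $\chi$ be a real measurable function on $[0,\infty)$ with $\chi(t)=1$ for $0\le t\le1$ and $0\le\chi(t)\le1$ for $t>1$, satisfying either (i) $\int_T^\infty\chi(t)\,dt=0$ for some constant $T$, where $T=\min\{t:\int_t^\infty\chi(s)\,ds=0\}$ and $T>1$, or (ii) $\chi(t)=\left(\frac{1+o(1)}{h(t)}\right)^t$ as $t\to\infty$ with $h$ non-decreasing and $h(t)\to\infty$. Let $\xi(u)$ be the unique real solution of $u=\int_1^\infty\chi(v)e^{\xi(u)v}\,dv$, and let $\sigma$ be the solution of $u\sigma(u)=\int_0^u\sigma(u-t)\chi(t)\,dt$ for $u>1$ with $\sigma(u)=1$ for $0\le u\le1$. If $\xi(u)=o(\log u)$ as $u\to\infty$, then $$\int_1^\infty\frac{\chi(v)e^{\xi(u)v}}{v}\,dv=o(u)\quad\text{and hence}\quad \sigma(u)=\exp\big((-\xi(u)+o(1))u\big)\quad\text{as } u\to\infty.$$ *)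

theory Defs
  imports "HOL-Analysis.Analysis" "HOL-Library.Landau_Symbols"
begin

text \<open>Tail integral of chi over [t, infinity), as an extended nonnegative real
  (chi is nonnegative on [1,infinity), so this is the natural meaning of the
  possibly infinite integral).\<close>
definition tail_nn :: "(real \<Rightarrow> real) \<Rightarrow> real \<Rightarrow> ennreal" where
  "tail_nn chi t = (\<integral>\<^sup>+ s. ennreal (chi s) * indicator {t..} s \<partial>lborel)"

definition cond_i :: "(real \<Rightarrow> real) \<Rightarrow> bool" where
  "cond_i chi \<longleftrightarrow> (\<exists>T. T > 1 \<and> tail_nn chi T = 0 \<and>
      (\<forall>t. 0 \<le> t \<and> t < T \<longrightarrow> tail_nn chi t \<noteq> 0))"

definition cond_ii :: "(real \<Rightarrow> real) \<Rightarrow> bool" where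
  "cond_ii chi \<longleftrightarrow> (\<exists>h e :: real \<Rightarrow> real. mono_on {0..} h \<and> filterlim h at_top at_top \<and>
      (e \<longlongrightarrow> 0) at_top \<and>
      (\<forall>\<^sub>F t in at_top. chi t = ((1 + e t) / h t) powr t))"

end

theory Submission
  imports Defs "HOL-Real_Asymp.Real_Asymp"
begin

lemma has_integral_refl_shift:
  fixes f :: "real \<Rightarrow> real"
  shows "((\<lambda>t. f (c - t)) has_integral I) {a..b} \<longleftrightarrow> (f has_integral I) {c-b..c-a}"
proof -
  have "((\<lambda>t. f (c - t)) has_integral I) {a..b} \<longleftrightarrow> ((\<lambda>x. (f \<circ> (+) c) (- x)) has_integral I) {- (-a)..- (-b)}"
    by (simp add: o_def)
  also have "\<dots> \<longleftrightarrow> ((f \<circ> (+) c) has_integral I) {-b..-a}"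
    by (rule has_integral_reflect_real)
  also have "\<dots> \<longleftrightarrow> (f has_integral I) {-b+c..-a+c}"
    by (rule has_integral_shift_Icc_real)
  finally show ?thesis by (simp add: algebra_simps)
qed

lemma integrable_refl_shift:
  fixes f :: "real \<Rightarrow> real"
  shows "(\<lambda>t. f (c - t)) integrable_on {a..b} \<longleftrightarrow> f integrable_on {c-b..c-a}"
  unfolding integrable_on_def using has_integral_refl_shift by blast

lemma integral_refl_shift:
  fixes f :: "real \<Rightarrow> real"
  shows "integral {a..b} (\<lambda>t. f (c - t)) = integral {c-b..c-a} f"
  by (metis has_integral_refl_shift integrable_integral integrable_refl_shift integral_unique not_integrable_integral)

lemma meas_chi:
  fixes chi :: "real \<Rightarrow> real"
  assumes meas: "set_borel_measurable lborel {0..} chi" and S: "S \<subseteq> {0..}" and g: "continuous_on UNIV g"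
  shows "(\<lambda>t. chi t * g t) \<in> borel_measurable (lebesgue_on S)"
proof -
  have "(\<lambda>x. indicator {0..} x *\<^sub>R chi x) \<in> borel_measurable lborel"
    using meas unfolding set_borel_measurable_def by simp
  then have 1: "(\<lambda>x. indicator {0..} x *\<^sub>R chi x) \<in> borel_measurable lebesgue"
    by (simp add: measurable_completion)
  then have 2: "(\<lambda>x. indicator {0..} x *\<^sub>R chi x) \<in> borel_measurable (lebesgue_on S)"
    by (simp add: measurable_restrict_space1)
  have 3: "(\<lambda>x. indicator {0..} x *\<^sub>R chi x * g x) \<in> borel_measurable (lebesgue_on S)"
    apply (rule borel_measurable_times[OF 2])
    using g by (simp add: borel_measurable_continuous_onI measurable_completion measurable_restrict_space1)
  show ?thesis
    apply (rule measurable_cong[THEN iffD1, OF _ 3])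
    using S by (auto simp: space_restrict_space indicator_def)
qed

lemma exp_int_sub:
  assumes "S \<subseteq> {0..}" "S \<in> sets lebesgue"
  shows "(\<lambda>t::real. exp (-t)) integrable_on S"
proof -
  have "(\<lambda>t::real. exp (-1*t)) integrable_on {0..}"
    by (rule integrable_on_exp_minus_to_infinity) simp
  then have "(\<lambda>t::real. exp (-t)) absolutely_integrable_on {0..}"
    by (intro nonnegative_absolutely_integrable_1) auto
  then have "(\<lambda>t::real. exp (-t)) absolutely_integrable_on S"
    using assms set_integrable_subset by blast
  then show ?thesis using set_lebesgue_integral_eq_integral(1) by blast
qed

lemma dom_int:
  fixes f :: "real \<Rightarrow> real"
  assumes "S \<subseteq> {0..}" "S \<in> sets lebesgue" "f \<in> borel_measurable (lebesgue_on S)"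
    and "\<And>t. t \<in> S \<Longrightarrow> \<bar>f t\<bar> \<le> C * exp (-t)"
  shows "f integrable_on S"
  apply (rule measurable_bounded_by_integrable_imp_integrable_real[OF assms(3) _ assms(4) assms(2)])
  using integrable_on_cmult_left[OF exp_int_sub[OF assms(1,2)], of C] by auto


lemma integral_le_but1:
  fixes f g :: "real \<Rightarrow> real"
  assumes "f integrable_on S" "g integrable_on S" "\<And>t. t \<in> S \<Longrightarrow> t \<noteq> c \<Longrightarrow> f t \<le> g t"
  shows "integral S f \<le> integral S g"
proof -
  define g' where "g' t = (if t = c then f t else g t)" for t
  have "(g' has_integral integral S g) S"
    by (rule has_integral_spike_finite[of "{c}"]) (use assms(2) in \<open>auto simp: g'_def\<close>)
  moreover have "(f has_integral integral S f) S" using assms(1) by auto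
  ultimately show ?thesis
    using has_integral_le[of f "integral S f" S g' "integral S g"] assms(3) by (auto simp: g'_def)
qed

lemma has_integral_split_inf:
  fixes f :: "real \<Rightarrow> real"
  assumes "a \<le> b" "f integrable_on {a..b}" "f integrable_on {b..}"
  shows "(f has_integral (integral {a..b} f + integral {b..} f)) {a..}"
proof -
  have "(f has_integral (integral {a..b} f + integral {b..} f)) ({a..b} \<union> {b..})"
    by (rule has_integral_Un) (use assms in \<open>auto intro: negligible_subset[of "{b}"]\<close>)
  moreover have "{a..b} \<union> {b..} = {a..}" using assms(1) by auto
  ultimately show ?thesis by simp
qed

locale L =
  fixes chi \<xi> \<sigma> h e :: "real \<Rightarrow> real"
  assumes meas: "set_borel_measurable lborel {0..} chi"
    and chi_one: "\<And>t. 0 \<le> t \<Longrightarrow> t \<le> 1 \<Longrightarrow> chi t = 1"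
    and chi_bnd: "\<And>t. t > 1 \<Longrightarrow> 0 \<le> chi t \<and> chi t \<le> 1"
    and xi_def: "\<And>u. u > 0 \<Longrightarrow> ((\<lambda>v. chi v * exp (\<xi> u * v)) has_integral u) {1..}"
    and sigma_init: "\<And>u. 0 \<le> u \<Longrightarrow> u \<le> 1 \<Longrightarrow> \<sigma> u = 1"
    and sigma_eq: "\<And>u. u > 1 \<Longrightarrow> ((\<lambda>t. \<sigma> (u - t) * chi t) has_integral (u * \<sigma> u)) {0..u}"
    and xi_small: "\<xi> \<in> o[at_top](\<lambda>u. ln u)"
    and h_mono: "mono_on {0..} h" and h_lim: "filterlim h at_top at_top"
    and e_lim: "(e \<longlongrightarrow> 0) at_top"
    and chi_ev: "\<forall>\<^sub>F t in at_top. chi t = ((1 + e t) / h t) powr t"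
begin

definition P :: "real \<Rightarrow> real \<Rightarrow> real" where "P s t = chi t * exp (s * t)"

lemma chi_nn: "0 \<le> t \<Longrightarrow> 0 \<le> chi t"
  using chi_one chi_bnd by (cases "t \<le> 1") auto

lemma chi_le1: "0 \<le> t \<Longrightarrow> chi t \<le> 1"
  using chi_one chi_bnd by (cases "t \<le> 1") auto

lemma P_nn: "0 \<le> t \<Longrightarrow> 0 \<le> P s t"
  by (simp add: P_def chi_nn)

lemma P_le: "0 \<le> t \<Longrightarrow> P s t \<le> exp (s * t)"
  using chi_le1[of t] by (simp add: P_def mult_left_le_one_le)

lemma rep: 
  assumes "\<eta> > 0"
  shows "\<exists>t1\<ge>1. \<forall>t\<ge>t1. h t > 0 \<and> 1 + e t > 0 \<and> \<bar>ln (1 + e t)\<bar> \<le> \<eta> \<and>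
            chi t = exp (t * (ln (1 + e t) - ln (h t)))"
proof -
  have l1: "((\<lambda>t. ln (1 + e t)) \<longlongrightarrow> ln (1 + 0)) at_top"
    by (intro tendsto_intros e_lim) simp
  have "\<forall>\<^sub>F t in at_top. dist (ln (1 + e t)) (ln (1 + 0)) < \<eta>"
    using tendstoD[OF l1 assms] .
  then have ev1: "\<forall>\<^sub>F t in at_top. \<bar>ln (1 + e t)\<bar> \<le> \<eta>"
    by (rule eventually_mono) (simp add: dist_real_def)
  have "\<forall>\<^sub>F t in at_top. dist (e t) 0 < 1/2"
    using tendstoD[OF e_lim, of "1/2"] by simp
  then have ev2: "\<forall>\<^sub>F t in at_top. 1 + e t > 0"
    by (rule eventually_mono) (simp add: dist_real_def)
  have ev3: "\<forall>\<^sub>F t in at_top. h t > 0"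
    using h_lim by (simp add: filterlim_at_top_dense)
  have "\<forall>\<^sub>F t in at_top. t \<ge> 1 \<and> h t > 0 \<and> 1 + e t > 0 \<and> \<bar>ln (1 + e t)\<bar> \<le> \<eta> \<and>
            chi t = exp (t * (ln (1 + e t) - ln (h t)))"
  proof (rule eventually_mono[OF eventually_conj[OF eventually_ge_at_top[of 1]
        eventually_conj[OF ev1 eventually_conj[OF ev2 eventually_conj[OF ev3 chi_ev]]]]])
    fix t assume "1 \<le> t \<and> \<bar>ln (1 + e t)\<bar> \<le> \<eta> \<and> 0 < 1 + e t \<and> 0 < h t \<and> chi t = ((1 + e t) / h t) powr t"
    then show "t \<ge> 1 \<and> h t > 0 \<and> 1 + e t > 0 \<and> \<bar>ln (1 + e t)\<bar> \<le> \<eta> \<and>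
            chi t = exp (t * (ln (1 + e t) - ln (h t)))"
      by (auto simp: powr_def ln_div mult.commute)
  qed
  then obtain N where N: "\<forall>t\<ge>N. t \<ge> 1 \<and> h t > 0 \<and> 1 + e t > 0 \<and> \<bar>ln (1 + e t)\<bar> \<le> \<eta> \<and>
            chi t = exp (t * (ln (1 + e t) - ln (h t)))" unfolding eventually_at_top_linorder by blast
  show ?thesis
    by (rule exI[of _ "max 1 N"]) (use N in auto)
qed

lemma decay: "\<exists>t0\<ge>1. \<forall>t\<ge>t0. chi t \<le> exp (- K * t)"
proof -
  obtain t1 where t1: "t1 \<ge> 1" and H: "\<forall>t\<ge>t1. h t > 0 \<and> 1 + e t > 0 \<and> \<bar>ln (1 + e t)\<bar> \<le> 1 \<and>
            chi t = exp (t * (ln (1 + e t) - ln (h t)))"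
    using rep[of 1] by auto
  have "\<forall>\<^sub>F t in at_top. h t \<ge> exp (K + 1)"
    using h_lim by (simp add: filterlim_at_top)
  then obtain t2 where t2: "\<forall>t\<ge>t2. h t \<ge> exp (K + 1)" unfolding eventually_at_top_linorder by auto
  show ?thesis
  proof (intro exI[of _ "max t1 t2"] conjI allI impI)
    fix t assume t: "max t1 t2 \<le> t"
    have "h t > 0" "\<bar>ln (1 + e t)\<bar> \<le> 1" and c: "chi t = exp (t * (ln (1 + e t) - ln (h t)))" using H t by auto
    moreover have "ln (h t) \<ge> K + 1" using t2 t
      by (metis exp_le_cancel_iff exp_ln max.bounded_iff \<open>h t > 0\<close>)
    ultimately have "ln (1 + e t) - ln (h t) \<le> - K" by linarith
    then have "t * (ln (1 + e t) - ln (h t)) \<le> t * (-K)"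
      using t t1 by (intro mult_left_mono) auto
    then show "chi t \<le> exp (- K * t)" using c by (simp add: mult.commute)
  qed (use t1 in auto)
qed

lemma P_meas: "S \<subseteq> {0..} \<Longrightarrow> (\<lambda>t. P s t) \<in> borel_measurable (lebesgue_on S)"
  unfolding P_def by (rule meas_chi[OF meas]) (auto intro!: continuous_intros)

lemma P_bound: "\<exists>C. \<forall>t\<ge>0. \<bar>P s t\<bar> \<le> C * exp (-t)"
proof -
  obtain t0 where t0: "t0 \<ge> 1" "\<forall>t\<ge>t0. chi t \<le> exp (- (\<bar>s\<bar>+1) * t)" using decay by blast
  show ?thesis
  proof (intro exI[of _ "exp ((\<bar>s\<bar>+1) * t0)"] allI impI)
    fix t :: real assume t: "0 \<le> t"
    have "\<bar>P s t\<bar> = P s t" using P_nn t by simp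
    show "\<bar>P s t\<bar> \<le> exp ((\<bar>s\<bar>+1) * t0) * exp (-t)"
    proof (cases "t \<le> t0")
      case True
      have "P s t \<le> exp (s * t)" using P_le t by simp
      also have "\<dots> \<le> exp (\<bar>s\<bar> * t0)"
      proof -
        have "s * t \<le> \<bar>s\<bar> * t" using t by (simp add: mult_right_mono)
        also have "\<dots> \<le> \<bar>s\<bar> * t0" using True by (simp add: mult_left_mono)
        finally show ?thesis by simp
      qed
      also have "\<dots> = exp ((\<bar>s\<bar>+1) * t0) * exp (-t0)" by (simp add: algebra_simps flip: exp_add)
      also have "\<dots> \<le> exp ((\<bar>s\<bar>+1) * t0) * exp (-t)" using True by simp
      finally show ?thesis using \<open>\<bar>P s t\<bar> = P s t\<close> by simp
    next
      case False
      have "P s t \<le> exp (- (\<bar>s\<bar>+1) * t) * exp (s * t)"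
        unfolding P_def using t0 False by (intro mult_right_mono) auto
      also have "\<dots> = exp (-t + (s - \<bar>s\<bar>) * t)" by (simp add: algebra_simps flip: exp_add)
      also have "\<dots> \<le> exp (-t)" using t by (simp add: mult_nonpos_nonneg)
      also have "\<dots> \<le> exp ((\<bar>s\<bar>+1) * t0) * exp (-t)" using t0 by simp
      finally show ?thesis using \<open>\<bar>P s t\<bar> = P s t\<close> by simp
    qed
  qed
qed

lemma P_int: assumes "S \<subseteq> {0..}" "S \<in> sets lebesgue" shows "(\<lambda>t. P s t) integrable_on S"
proof -
  obtain C where C: "\<forall>t\<ge>0. \<bar>P s t\<bar> \<le> C * exp (-t)" using P_bound by blast
  show ?thesis
  proof (rule dom_int[OF assms P_meas[OF assms(1)]])
    fix t assume "t \<in> S"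
    then have "t \<ge> 0" using assms(1) by auto
    then show "\<bar>P s t\<bar> \<le> C * exp (- t)" using C by simp
  qed
qed

lemma Pd_int: 
  assumes "S \<subseteq> {1..}" "S \<in> sets lebesgue" shows "(\<lambda>t. P s t / t) integrable_on S"
proof -
  have S0: "S \<subseteq> {0..}" using assms by auto
  have "(\<lambda>t. chi t * (exp (s * t) / max 1 t)) \<in> borel_measurable (lebesgue_on S)"
    by (rule meas_chi[OF meas S0]) (auto intro!: continuous_intros)
  then have m: "(\<lambda>t. P s t / t) \<in> borel_measurable (lebesgue_on S)"
    apply (rule measurable_cong[THEN iffD1, rotated])
    using assms(1) by (auto simp: space_restrict_space P_def max_def)
  obtain C where C: "\<forall>t\<ge>0. \<bar>P s t\<bar> \<le> C * exp (-t)" using P_bound by blast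
  show ?thesis
  proof (rule dom_int[OF S0 assms(2) m])
    fix t assume "t \<in> S"
    then have t: "t \<ge> 1" using assms by auto
    have "\<bar>P s t / t\<bar> = \<bar>P s t\<bar> / t" using t by simp
    also have "\<dots> \<le> \<bar>P s t\<bar>" using t by (simp add: divide_le_eq mult_le_cancel_left1)
    finally have "\<bar>P s t / t\<bar> \<le> \<bar>P s t\<bar>" .
    moreover have "\<bar>P s t\<bar> \<le> C * exp (- t)" using C t by simp
    ultimately show "\<bar>P s t / t\<bar> \<le> C * exp (- t)" by linarith
  qed
qed

end

context L begin

lemma P_int_Ici: "a \<ge> 0 \<Longrightarrow> (\<lambda>t. P s t) integrable_on {a..}"
  by (rule P_int) auto
lemma P_int_Icc: "a \<ge> 0 \<Longrightarrow> (\<lambda>t. P s t) integrable_on {a..b}"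
  by (rule P_int) auto

definition X :: "real \<Rightarrow> real" where "X s = integral {0..} (\<lambda>t. P s t)"
definition X1 :: "real \<Rightarrow> real" where "X1 s = integral {1..} (\<lambda>t. P s t)"

lemma X1_xi: "u > 0 \<Longrightarrow> X1 (\<xi> u) = u"
  unfolding X1_def P_def using xi_def integral_unique by blast

lemma X_split: "X s = integral {0..1} (\<lambda>t. P s t) + X1 s"
  unfolding X_def X1_def
  by (rule integral_unique[OF has_integral_split_inf]) (auto intro: P_int_Icc P_int_Ici)

lemma X_ge1: assumes "s \<ge> 0" shows "1 \<le> X s"
proof -
  have "integral {0..1} (\<lambda>t::real. 1) \<le> integral {0..1} (\<lambda>t. P s t)"
    by (rule integral_le) (use assms chi_one P_int_Icc[of 0 s 1] in \<open>auto simp: P_def\<close>)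
  moreover have "0 \<le> X1 s" unfolding X1_def
    by (rule integral_nonneg) (auto intro: P_int_Ici P_nn)
  ultimately show ?thesis by (simp add: X_split)
qed

lemma X_mono: assumes "s \<le> s'" shows "X s \<le> X s'"
proof -
  have "P s t \<le> P s' t" if "t \<in> {0..}" for t
    unfolding P_def using assms that chi_nn[of t] by (intro mult_left_mono) (auto intro: mult_right_mono)
  then show ?thesis unfolding X_def by (intro integral_le P_int_Ici) auto
qed

lemma X1_mono: assumes "s \<le> s'" shows "X1 s \<le> X1 s'"
proof -
  have "P s t \<le> P s' t" if "t \<in> {1..}" for t
    unfolding P_def using assms that chi_nn[of t] by (intro mult_left_mono) (auto intro: mult_right_mono)
  then show ?thesis unfolding X1_def by (intro integral_le P_int_Ici) auto
qed

lemma G_le_X: assumes "0 \<le> a" shows "integral {a..b} (\<lambda>t. P s t) \<le> X s"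
  unfolding X_def
  by (rule integral_subset_le) (use assms in \<open>auto intro: P_int_Icc P_int_Ici P_nn\<close>)

lemma X_xi: assumes "u > 0" shows "X (\<xi> u) \<le> exp \<bar>\<xi> u\<bar> + u"
proof -
  have "P (\<xi> u) t \<le> exp \<bar>\<xi> u\<bar>" if t: "t \<in> {0..1}" for t
  proof -
    have "P (\<xi> u) t \<le> exp (\<xi> u * t)" using P_le t by auto
    moreover have "\<xi> u * t \<le> \<bar>\<xi> u\<bar> * t" using t by (intro mult_right_mono) auto
    moreover have "\<bar>\<xi> u\<bar> * t \<le> \<bar>\<xi> u\<bar> * 1" using t by (intro mult_left_mono) auto
    ultimately have "P (\<xi> u) t \<le> exp (\<bar>\<xi> u\<bar>)"
      using exp_le_cancel_iff order.trans by (metis mult.right_neutral)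
    then show ?thesis by simp
  qed
  then have "integral {0..1} (\<lambda>t. P (\<xi> u) t) \<le> integral {0..1} (\<lambda>t::real. exp \<bar>\<xi> u\<bar>)"
    by (intro integral_le P_int_Icc Henstock_Kurzweil_Integration.integrable_const_ivl) auto
  then show ?thesis using X1_xi[OF assms] by (simp add: X_split)
qed

lemma sigma_int_unit: assumes "a \<ge> 0" shows "\<sigma> integrable_on {a..a+1}"
proof (cases "a = 0")
  case True
  have "(\<lambda>x::real. 1::real) integrable_on {0..1}" by blast
  then show ?thesis using True sigma_init by (auto intro: integrable_eq)
next
  case False
  then have w: "a + 1 > 1" using assms by simp
  have "(\<lambda>t. \<sigma> (a + 1 - t) * chi t) integrable_on {0..a+1}"
    using sigma_eq[OF w] by blast
  then have "(\<lambda>t. \<sigma> (a + 1 - t) * chi t) integrable_on {0..1}"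
    by (rule integrable_on_subinterval) (use assms in auto)
  then have "(\<lambda>t. \<sigma> (a + 1 - t)) integrable_on {0..1}"
    by (rule integrable_eq) (simp add: chi_one)
  then show ?thesis unfolding integrable_refl_shift by simp
qed

lemma sigma_cont:
  assumes "a \<ge> 0" "\<eta> > 0"
  shows "\<exists>\<theta>>0. \<theta> \<le> 1 \<and> (\<forall>w. a \<le> w \<and> w \<le> a + \<theta> \<longrightarrow> \<bar>integral {a..w} \<sigma>\<bar> < \<eta>)"
proof -
  have "continuous_on {a..a+1} (\<lambda>x. integral {a..x} \<sigma>)"
    by (rule indefinite_integral_continuous_1[OF sigma_int_unit[OF assms(1)]])
  moreover have "a \<in> {a..a+1}" by simp
  ultimately obtain d where d: "d > 0" "\<forall>x'\<in>{a..a+1}. dist x' a < d \<longrightarrow>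
      dist (integral {a..x'} \<sigma>) (integral {a..a} \<sigma>) < \<eta>"
    using assms(2) unfolding continuous_on_iff by blast
  show ?thesis
  proof (intro exI[of _ "min (d/2) 1"] conjI allI impI)
    fix w assume w: "a \<le> w \<and> w \<le> a + min (d / 2) 1"
    then have "w \<in> {a..a+1}" "dist w a < d" using d by (auto simp: dist_real_def)
    then show "\<bar>integral {a..w} \<sigma>\<bar> < \<eta>" using d by (auto simp: dist_real_def)
  qed (use d in auto)
qed

end

context L begin

lemma LB:
  assumes u1: "1 \<le> u" and S0: "0 \<le> S"
    and HG: "\<And>w. 1 < w \<Longrightarrow> w \<le> u \<Longrightarrow> 2 * w \<le> integral {0..w} (P S)"
    and w: "0 \<le> w" "w \<le> u"
  shows "exp (- S * w) \<le> \<sigma> w"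
proof (rule ccontr)
  assume nw: "\<not> exp (- S * w) \<le> \<sigma> w"
  define B where "B = {x. 0 \<le> x \<and> x \<le> u \<and> \<sigma> x < exp (- S * x)}"
  have wB: "w \<in> B" using nw w by (auto simp: B_def)
  then have Bne: "B \<noteq> {}" by auto
  have Bbdd: "bdd_below B" by (rule bdd_belowI[of B 0]) (auto simp: B_def)
  define a where "a = Inf B"
  have B1: "1 < x" if "x \<in> B" for x
  proof (rule ccontr)
    assume "\<not> 1 < x"
    then have "\<sigma> x = 1" using that sigma_init by (auto simp: B_def)
    moreover have "exp (- S * x) \<le> 1" using that S0 by (auto simp: B_def mult_nonneg_nonneg)
    ultimately show False using that by (auto simp: B_def)
  qed
  have a1: "1 \<le> a" unfolding a_def
    by (rule cInf_greatest[OF Bne]) (use B1 in force)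
  have aw: "a \<le> w" unfolding a_def by (rule cInf_lower[OF wB Bbdd])
  have below: "exp (- S * y) \<le> \<sigma> y" if "0 \<le> y" "y < a" for y
  proof (rule ccontr)
    assume "\<not> exp (- S * y) \<le> \<sigma> y"
    then have "y \<in> B" using that aw w by (auto simp: B_def)
    then have "a \<le> y" unfolding a_def by (rule cInf_lower[OF _ Bbdd])
    then show False using that by simp
  qed
  define \<eta> where "\<eta> = exp (- S * u) / 4"
  have \<eta>0: "\<eta> > 0" by (simp add: \<eta>_def)
  obtain \<theta> where \<theta>: "\<theta> > 0" "\<theta> \<le> 1" "\<And>w'. a \<le> w' \<Longrightarrow> w' \<le> a + \<theta> \<Longrightarrow> \<bar>integral {a..w'} \<sigma>\<bar> < \<eta>"
    using sigma_cont[of a \<eta>] a1 \<eta>0 by auto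
  define \<theta>' where "\<theta>' = min \<theta> (exp (- S) / 2)"
  have \<theta>'0: "\<theta>' > 0" using \<theta> by (simp add: \<theta>'_def)
  have "Inf B < a + \<theta>'" using \<theta>'0 by (simp add: a_def)
  then obtain x where xB: "x \<in> B" and xa: "x < a + \<theta>'"
    using cInf_less_iff[OF Bne Bbdd] by blast
  have ax: "a \<le> x" unfolding a_def by (rule cInf_lower[OF xB Bbdd])
  have x1: "1 < x" using B1 xB by simp
  have xu: "x \<le> u" and xs: "\<sigma> x < exp (- S * x)" using xB by (auto simp: B_def)
  define d where "d = x - a"
  have d0: "0 \<le> d" and dx: "d \<le> x" and d1: "d \<le> 1" and dS: "d \<le> exp (- S) / 2" and d\<theta>: "x \<le> a + \<theta>"
    using ax a1 xa \<theta> by (auto simp: d_def \<theta>'_def)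
  define F where "F t = \<sigma> (x - t) * chi t" for t
  have Fh: "(F has_integral x * \<sigma> x) {0..x}" unfolding F_def using sigma_eq x1 by simp
  then have Fi: "F integrable_on {0..x}" by blast
  have Fid: "F integrable_on {d..x}" by (rule integrable_on_subinterval[OF Fi]) (use d0 in auto)
  have split: "integral {0..x} F = integral {0..d} F + integral {d..x} F"
    by (rule Henstock_Kurzweil_Integration.integral_combine[symmetric, OF d0 dx Fi])
  have I1: "integral {0..d} F = integral {a..x} \<sigma>"
  proof -
    have "integral {0..d} F = integral {0..d} (\<lambda>t. \<sigma> (x - t))"
      by (rule integral_cong) (use d1 chi_one in \<open>auto simp: F_def\<close>)
    also have "\<dots> = integral {x-d..x-0} \<sigma>" by (rule integral_refl_shift)
    finally show ?thesis by (simp add: d_def)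
  qed
  have I1b: "\<bar>integral {a..x} \<sigma>\<bar> < \<eta>" using \<theta>(3)[OF ax d\<theta>] .
  have I2: "exp (- S * x) * integral {d..x} (P S) \<le> integral {d..x} F"
  proof -
    have "integral {d..x} (\<lambda>t. exp (- S * x) * P S t) \<le> integral {d..x} F"
    proof (rule integral_le_but1[where c = d])
      show "(\<lambda>t. exp (- S * x) * P S t) integrable_on {d..x}"
        using integrable_on_cmult_left[OF P_int_Icc[OF d0, of S x]] by simp
      show "F integrable_on {d..x}" by (rule Fid)
      fix t assume t: "t \<in> {d..x}" "t \<noteq> d"
      then have "0 \<le> x - t" "x - t < a" by (auto simp: d_def)
      then have le: "exp (- S * (x - t)) \<le> \<sigma> (x - t)" by (rule below)
      have "exp (- S * x) * P S t = exp (- S * (x - t)) * chi t"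
        by (simp add: P_def algebra_simps flip: exp_add)
      also have "\<dots> \<le> \<sigma> (x - t) * chi t"
        using le chi_nn[of t] t d0 by (intro mult_right_mono) auto
      finally show "exp (- S * x) * P S t \<le> F t" by (simp add: F_def)
    qed
    then show ?thesis by simp
  qed
  have Gsplit: "integral {0..x} (P S) = integral {0..d} (P S) + integral {d..x} (P S)"
    by (rule Henstock_Kurzweil_Integration.integral_combine[symmetric, OF d0 dx P_int_Icc]) simp
  have Gd: "integral {0..d} (P S) \<le> d * exp S"
  proof -
    have "integral {0..d} (P S) \<le> integral {0..d} (\<lambda>t::real. exp S)"
    proof (rule integral_le)
      fix t assume t: "t \<in> {0..d}"
      have "P S t \<le> exp (S * t)" using P_le t by auto
      also have "S * t \<le> S * 1" using t d1 S0 by (intro mult_left_mono) auto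
      then have "exp (S * t) \<le> exp S" by simp
      finally show "P S t \<le> exp S" .
    qed (use P_int_Icc in auto)
    then show ?thesis using d0 by simp
  qed
  have "d * exp S \<le> 1/2" using dS by (simp add: field_simps exp_minus)
  then have G2: "2 * x - 1/2 \<le> integral {d..x} (P S)"
    using HG[OF x1 xu] Gsplit Gd by linarith
  define E where "E = exp (- S * x)"
  have E0: "E > 0" by (simp add: E_def)
  have Eu: "exp (- S * u) \<le> E" unfolding E_def using xu S0 by (simp add: mult_left_mono)
  have "E * (2 * x - 1/2) \<le> E * integral {d..x} (P S)"
    using G2 E0 by (intro mult_left_mono) auto
  moreover have "E * integral {d..x} (P S) \<le> integral {d..x} F" using I2 unfolding E_def .
  moreover have "x * \<sigma> x = integral {0..d} F + integral {d..x} F" using split integral_unique[OF Fh] by simp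
  ultimately have low: "E * (2 * x - 1/2) - \<eta> \<le> x * \<sigma> x"
    using I1 I1b by linarith
  have up: "x * \<sigma> x < x * E" using xs x1 by (simp add: E_def)
  have "x * E \<ge> E" using x1 E0 by simp
  then have "E / 2 < \<eta>" using low up by (simp add: algebra_simps) 
  then show False using Eu E0 unfolding \<eta>_def by linarith
qed

end

lemma exp_quad: assumes "(0::real) \<le> y" shows "y * y / 4 \<le> exp y"
proof -
  have "y / 2 \<le> exp (y / 2)" using exp_ge_add_one_self[of "y/2"] by linarith
  then have "(y/2) * (y/2) \<le> exp (y/2) * exp (y/2)" using assms by (intro mult_mono) auto
  then show ?thesis by (simp flip: exp_add)
qed

lemma exp_lin:
  assumes \<epsilon>: "(0::real) < \<epsilon>" and w: "1 + 4 * (32 / \<epsilon> + 4) / \<epsilon> \<le> w"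
  shows "2 * w \<le> exp (\<epsilon> * (w - 1) / 4)"
proof -
  define y where "y = \<epsilon> * (w - 1) / 4"
  have e8: "8 * y / \<epsilon> = 2 * (w - 1)" using \<epsilon> unfolding y_def by simp
  have "4 * (32 / \<epsilon> + 4) / \<epsilon> \<le> w - 1" using w by simp
  then have "\<epsilon> * (4 * (32 / \<epsilon> + 4) / \<epsilon>) / 4 \<le> \<epsilon> * (w - 1) / 4"
    using \<epsilon> by (intro divide_right_mono mult_left_mono) auto
  then have y1: "32 / \<epsilon> + 4 \<le> y" using \<epsilon> unfolding y_def by simp
  have p: "0 < 32 / \<epsilon>" using \<epsilon> by simp
  have y0: "4 \<le> y" using y1 p by linarith
  have "32 / \<epsilon> = 4 * (8 / \<epsilon>)" by simp
  then have "8 / \<epsilon> + 1 \<le> y / 4" using y1 by linarith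
  then have "y * (8 / \<epsilon> + 1) \<le> y * (y / 4)"
    using y0 by (intro mult_left_mono) auto
  then have A1: "8 * y / \<epsilon> + y \<le> y * y / 4" by (simp add: algebra_simps)
  have A2: "y * y / 4 \<le> exp y" using y0 by (intro exp_quad) simp
  have A3: "2 * w \<le> 8 * y / \<epsilon> + y" unfolding e8 using y0 by (simp add: algebra_simps)
  have "2 * w \<le> exp y" using order.trans[OF A3 order.trans[OF A1 A2]] .
  then show ?thesis by (simp add: y_def)
qed

context L begin

lemma xi_top: "filterlim \<xi> at_top at_top"
  unfolding filterlim_at_top
proof
  fix K
  show "\<forall>\<^sub>F u in at_top. K \<le> \<xi> u"
  proof (rule eventually_mono[OF eventually_gt_at_top[of "max 0 (X1 K)"]])
    fix u assume u: "max 0 (X1 K) < u"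
    show "K \<le> \<xi> u"
    proof (rule ccontr)
      assume "\<not> K \<le> \<xi> u"
      then have "X1 (\<xi> u) \<le> X1 K" by (intro X1_mono) simp
      then show False using X1_xi[of u] u by simp
    qed
  qed
qed

lemma xi_small_ev: assumes "c > 0" shows "\<forall>\<^sub>F u in at_top. \<bar>\<xi> u\<bar> \<le> c * ln u"
proof -
  have "\<forall>\<^sub>F u in at_top. norm (\<xi> u) \<le> c * norm (ln u)"
    using landau_o.smallD[OF xi_small assms] .
  then show ?thesis
  proof (rule eventually_mono[OF eventually_conj[OF _ eventually_ge_at_top[of 1]]])
    fix x :: real assume H: "norm (\<xi> x) \<le> c * norm (ln x) \<and> 1 \<le> x"
    then have "\<bar>ln x\<bar> = ln x" by simp
    with H show "\<bar>\<xi> x\<bar> \<le> c * ln x" by simp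
  qed
qed

lemma P_rep: assumes "t > 0" "chi t = exp (t * r)" shows "P s t = exp (t * (s + r))"
  using assms by (simp add: P_def algebra_simps flip: exp_add)

end

context L begin

lemma HG_ev:
  assumes \<epsilon>: "0 < \<epsilon>" "\<epsilon> \<le> 1"
  shows "\<forall>\<^sub>F u in at_top. \<forall>w. 1 < w \<and> w \<le> u \<longrightarrow> 2 * w \<le> integral {0..w} (P (\<xi> u + \<epsilon>))"
proof -
  obtain t1 where t1: "t1 \<ge> 1" and T1: "\<forall>t\<ge>t1. h t > 0 \<and> 1 + e t > 0 \<and> \<bar>ln (1 + e t)\<bar> \<le> \<epsilon>/8 \<and>
            chi t = exp (t * (ln (1 + e t) - ln (h t)))"
    using rep[of "\<epsilon>/8"] \<epsilon> by auto
  define r where "r t = ln (1 + e t) - ln (h t)" for t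
  have Prep: "P s t = exp (t * (s + r t))" if "t \<ge> t1" for s t
    using P_rep[of t "r t" s] that t1 T1 by (auto simp: r_def)
  define A where "A = 3 / \<epsilon>"
  have A1: "A \<ge> 1" using \<epsilon> by (simp add: A_def field_simps)
  have eA: "exp (\<epsilon> * A) \<ge> 4"
  proof -
    have "\<epsilon> * A = 3" using \<epsilon> by (simp add: A_def)
    moreover have "(4::real) \<le> exp 3" using exp_ge_add_one_self[of 3] by simp
    ultimately show ?thesis by simp
  qed
  define w2 where "w2 = 1 + 4 * (32 / \<epsilon> + 4) / \<epsilon>"
  define W0 where "W0 = max (max A w2) (t1 + 1)"
  have W01: "W0 \<ge> 1" using A1 by (simp add: W0_def)
  define S0 where "S0 = 2 * ln (4 * W0)"
  have ev1: "\<forall>\<^sub>F u in at_top. max 0 S0 \<le> \<xi> u"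
    using xi_top unfolding filterlim_at_top by blast
  have ev2: "\<forall>\<^sub>F u in at_top. \<bar>\<xi> u\<bar> \<le> (1 / (2 * A)) * ln u"
    by (rule xi_small_ev) (use A1 in simp)
  have ev3: "\<forall>\<^sub>F u in at_top. max 1 (max (16 * A^2) (8 / \<epsilon>)) \<le> u"
    by (rule eventually_ge_at_top)
  show ?thesis
  proof (rule eventually_mono[OF eventually_conj[OF ev1 eventually_conj[OF ev2 ev3]]])
    fix u assume U: "max 0 S0 \<le> \<xi> u \<and> \<bar>\<xi> u\<bar> \<le> (1 / (2 * A)) * ln u \<and> max 1 (max (16 * A^2) (8 / \<epsilon>)) \<le> u"
    define S where "S = \<xi> u + \<epsilon>"
    have u1: "u \<ge> 1" and xi0: "\<xi> u \<ge> 0" and SS0: "S \<ge> S0" and S0': "S \<ge> 0" using U \<epsilon> by (auto simp: S_def)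
    have sq: "exp (\<bar>\<xi> u\<bar> * A) \<le> sqrt u"
    proof -
      have "\<bar>\<xi> u\<bar> * A \<le> (1 / (2 * A)) * ln u * A" using U A1 by (intro mult_right_mono) auto
      also have "\<dots> = ln (sqrt u)" using A1 u1 by (simp add: ln_sqrt)
      finally show ?thesis using u1 by (metis exp_le_cancel_iff exp_ln real_sqrt_gt_0_iff less_le_trans zero_less_one)
    qed
    have bigu: "2 * A * sqrt u + 4 / \<epsilon> \<le> u"
    proof -
      have "sqrt (16 * A^2) \<le> sqrt u" using U by (simp del: real_sqrt_le_iff add: real_sqrt_le_mono)
      then have s4: "4 * A \<le> sqrt u" using A1 by (simp add: real_sqrt_mult)
      have "2 * A * sqrt u \<le> (sqrt u / 2) * sqrt u" using s4 u1 by (intro mult_right_mono) auto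
      also have "\<dots> = u / 2" using u1 by simp
      finally have "2 * A * sqrt u \<le> u / 2" .
      moreover have "4 / \<epsilon> \<le> u / 2" using U \<epsilon> by (auto simp: field_simps)
      ultimately show ?thesis by linarith
    qed
    show "\<forall>w. 1 < w \<and> w \<le> u \<longrightarrow> 2 * w \<le> integral {0..w} (P (\<xi> u + \<epsilon>))"
    proof (intro allI impI)
      fix w assume w: "1 < w \<and> w \<le> u"
      have PSi: "P S integrable_on {0..w}" by (rule P_int_Icc) simp
      have "2 * w \<le> integral {0..w} (P S)"
      proof (cases "w \<le> W0")
        case True
        have "integral {1/2..1} (P S) \<le> integral {0..w} (P S)"
          by (rule integral_subset_le) (use w in \<open>auto intro: P_int_Icc P_nn\<close>)
        moreover have "integral {1/2..1} (\<lambda>t::real. exp (S/2)) \<le> integral {1/2..1} (P S)"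
        proof (rule integral_le)
          fix t assume t: "t \<in> {1/2..1::real}"
          have "S / 2 \<le> S * t" using t S0' by (auto intro: mult_left_mono[of "1/2" t S, simplified])
          then have "exp (S/2) \<le> exp (S * t)" by simp
          also have "\<dots> = P S t" using chi_one t by (simp add: P_def)
          finally show "exp (S/2) \<le> P S t" .
        qed (auto intro: P_int_Icc)
        moreover have "exp (S0 / 2) = 4 * W0" using W01 by (simp add: S0_def)
        moreover have "exp (S0 / 2) \<le> exp (S / 2)" using SS0 by simp
        ultimately show ?thesis using True by simp
      next
        case False
        then have wA: "A \<le> w" and ww2: "w2 \<le> w" and wt1: "t1 \<le> w - 1" by (auto simp: W0_def)
        show ?thesis
        proof (cases "\<forall>t\<in>{w-1..w}. \<epsilon>/4 \<le> S + r t")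
          case True
          have "integral {w-1..w} (\<lambda>t::real. exp (\<epsilon> * (w - 1) / 4)) \<le> integral {w-1..w} (P S)"
          proof (rule integral_le)
            fix t assume t: "t \<in> {w-1..w}"
            then have tt1: "t \<ge> t1" and t0: "t \<ge> 0" using wt1 t1 by auto
            have "(w - 1) * (\<epsilon>/4) \<le> t * (\<epsilon>/4)" using t \<epsilon> by (intro mult_right_mono) auto
            also have "\<dots> \<le> t * (S + r t)" using True t t0 by (intro mult_left_mono) auto
            finally have "\<epsilon> * (w - 1) / 4 \<le> t * (S + r t)" by (simp add: algebra_simps)
            then show "exp (\<epsilon> * (w - 1) / 4) \<le> P S t" using Prep[OF tt1] by simp
          qed (use wt1 t1 in \<open>auto intro: P_int_Icc\<close>)
          moreover have "integral {w-1..w} (P S) \<le> integral {0..w} (P S)"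
            by (rule integral_subset_le) (use wt1 t1 in \<open>auto intro: P_int_Icc P_nn\<close>)
          moreover have "2 * w \<le> exp (\<epsilon> * (w - 1) / 4)"
            by (rule exp_lin) (use \<epsilon> ww2 in \<open>auto simp: w2_def\<close>)
          ultimately show ?thesis by simp
        next
          case False
          then obtain t' where t': "t' \<in> {w-1..w}" "S + r t' < \<epsilon>/4" by auto
          have tail_pt: "P (\<xi> u) t \<le> exp (- (\<epsilon>/2) * t)" if t: "t \<in> {w..}" for t
          proof -
            have tt': "t' \<le> t" and t't1: "t1 \<le> t'" using t t' wt1 by auto
            then have tt1: "t1 \<le> t" by simp
            have "h t' \<le> h t" using h_mono tt' t't1 t1 by (auto intro: mono_onD)
            moreover have "h t' > 0" using T1 t't1 by auto
            ultimately have "ln (h t') \<le> ln (h t)" by simp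
            moreover have "\<bar>ln (1 + e t)\<bar> \<le> \<epsilon>/8" "\<bar>ln (1 + e t')\<bar> \<le> \<epsilon>/8" using T1 tt1 t't1 by auto
            ultimately have "r t \<le> r t' + \<epsilon>/4" unfolding r_def by linarith
            then have "\<xi> u + r t \<le> - (\<epsilon>/2)" using t' by (simp add: S_def)
            then have "t * (\<xi> u + r t) \<le> t * (- (\<epsilon>/2))" using tt1 t1 by (intro mult_left_mono) auto
            then show ?thesis using Prep[OF tt1] by (simp add: mult.commute)
          qed
          have eint: "((\<lambda>t. exp (- (\<epsilon>/2) * t)) has_integral exp (- (\<epsilon>/2) * w) / (\<epsilon>/2)) {w..}"
            by (rule has_integral_exp_minus_to_infinity) (use \<epsilon> in simp)
          have tail: "integral {w..} (P (\<xi> u)) \<le> 2 / \<epsilon>"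
          proof -
            have "integral {w..} (P (\<xi> u)) \<le> integral {w..} (\<lambda>t. exp (- (\<epsilon>/2) * t))"
              by (rule integral_le) (use tail_pt eint w in \<open>auto intro: P_int_Ici\<close>)
            also have "\<dots> = exp (- (\<epsilon>/2) * w) / (\<epsilon>/2)" using eint by (rule integral_unique)
            also have "\<dots> \<le> 1 / (\<epsilon>/2)" using \<epsilon> w by (intro divide_right_mono) auto
            finally show ?thesis by simp
          qed
          have head: "integral {1..A} (P (\<xi> u)) \<le> A * sqrt u"
          proof -
            have "integral {1..A} (P (\<xi> u)) \<le> integral {1..A} (\<lambda>t::real. exp (\<bar>\<xi> u\<bar> * A))"
            proof (rule integral_le)
              fix t assume t: "t \<in> {1..A}"
              have "P (\<xi> u) t \<le> exp (\<xi> u * t)" using P_le t by auto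
              moreover have "\<xi> u * t \<le> \<bar>\<xi> u\<bar> * t" using t by (intro mult_right_mono) auto
              moreover have "\<bar>\<xi> u\<bar> * t \<le> \<bar>\<xi> u\<bar> * A" using t by (intro mult_left_mono) auto
              ultimately show "P (\<xi> u) t \<le> exp (\<bar>\<xi> u\<bar> * A)"
                by (meson exp_le_cancel_iff order.trans)
            qed (auto intro: P_int_Icc)
            also have "\<dots> = (A - 1) * exp (\<bar>\<xi> u\<bar> * A)" using A1 by simp
            also have "\<dots> \<le> A * exp (\<bar>\<xi> u\<bar> * A)" by (simp add: algebra_simps)
            also have "\<dots> \<le> A * sqrt u" using sq A1 by (intro mult_left_mono) auto
            finally show ?thesis .
          qed
          have s1: "u = integral {1..A} (P (\<xi> u)) + integral {A..} (P (\<xi> u))"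
          proof -
            have "(P (\<xi> u) has_integral (integral {1..A} (P (\<xi> u)) + integral {A..} (P (\<xi> u)))) {1..}"
              by (rule has_integral_split_inf) (use A1 in \<open>auto intro: P_int_Icc P_int_Ici\<close>)
            then show ?thesis using X1_xi[of u] u1 unfolding X1_def by (simp add: integral_unique)
          qed
          have s2: "integral {A..} (P (\<xi> u)) = integral {A..w} (P (\<xi> u)) + integral {w..} (P (\<xi> u))"
          proof -
            have "(P (\<xi> u) has_integral (integral {A..w} (P (\<xi> u)) + integral {w..} (P (\<xi> u)))) {A..}"
              by (rule has_integral_split_inf) (use A1 wA w in \<open>auto intro: P_int_Icc P_int_Ici\<close>)
            then show ?thesis by (simp add: integral_unique)
          qed
          have mid: "u - A * sqrt u - 2 / \<epsilon> \<le> integral {A..w} (P (\<xi> u))"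
            using s1 s2 head tail by linarith
          have "integral {A..w} (\<lambda>t. exp (\<epsilon> * A) * P (\<xi> u) t) \<le> integral {A..w} (P S)"
          proof (rule integral_le)
            fix t assume t: "t \<in> {A..w}"
            have "exp (\<epsilon> * A) * P (\<xi> u) t \<le> exp (\<epsilon> * t) * P (\<xi> u) t"
              using t \<epsilon> A1 P_nn[of t "\<xi> u"] by (intro mult_right_mono) auto
            also have "\<dots> = P S t" by (simp add: P_def S_def algebra_simps flip: exp_add)
            finally show "exp (\<epsilon> * A) * P (\<xi> u) t \<le> P S t" .
          qed (use A1 in \<open>auto intro!: P_int_Icc integrable_on_cmult_left\<close>)
          then have m2: "exp (\<epsilon> * A) * integral {A..w} (P (\<xi> u)) \<le> integral {A..w} (P S)" by simp
          have "integral {A..w} (P S) \<le> integral {0..w} (P S)"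
            by (rule integral_subset_le) (use A1 in \<open>auto intro: P_int_Icc P_nn\<close>)
          moreover have "4 * integral {A..w} (P (\<xi> u)) \<le> exp (\<epsilon> * A) * integral {A..w} (P (\<xi> u))"
          proof -
            have "0 \<le> integral {A..w} (P (\<xi> u))"
              by (rule integral_nonneg) (use A1 in \<open>auto intro: P_int_Icc P_nn\<close>)
            then show ?thesis using eA by (intro mult_right_mono) auto
          qed
          moreover have "2 * u \<le> 4 * (u - A * sqrt u - 2 / \<epsilon>)" using bigu by (simp add: algebra_simps)
          moreover have "4 * (u - A * sqrt u - 2 / \<epsilon>) \<le> 4 * integral {A..w} (P (\<xi> u))"
            using mid by (intro mult_left_mono) auto
          moreover have "2 * w \<le> 2 * u" using w by simp
          ultimately show ?thesis using m2
            by (meson order.trans)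
        qed
      qed
      then show "2 * w \<le> integral {0..w} (P (\<xi> u + \<epsilon>))" by (simp add: S_def)
    qed
  qed
qed

end

context L begin

lemma LB_ev:
  assumes \<epsilon>: "0 < \<epsilon>" "\<epsilon> \<le> 1"
  shows "\<forall>\<^sub>F u in at_top. exp (- (\<xi> u + \<epsilon>) * u) \<le> \<sigma> u"
proof -
  have ev0: "\<forall>\<^sub>F u in at_top. 0 \<le> \<xi> u" using xi_top unfolding filterlim_at_top by blast
  show ?thesis
  proof (rule eventually_mono[OF eventually_conj[OF HG_ev[OF \<epsilon>] eventually_conj[OF ev0 eventually_ge_at_top[of 1]]]])
    fix u assume H: "(\<forall>w. 1 < w \<and> w \<le> u \<longrightarrow> 2 * w \<le> integral {0..w} (P (\<xi> u + \<epsilon>))) \<and> 0 \<le> \<xi> u \<and> 1 \<le> u"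
    show "exp (- (\<xi> u + \<epsilon>) * u) \<le> \<sigma> u"
      by (rule LB[of u "\<xi> u + \<epsilon>" u]) (use H \<epsilon> in auto)
  qed
qed

lemma sigma_pos: assumes "0 \<le> x" shows "0 < \<sigma> x"
proof -
  have ev0: "\<forall>\<^sub>F u in at_top. 0 \<le> \<xi> u" using xi_top unfolding filterlim_at_top by blast
  have "\<forall>\<^sub>F u in at_top. (\<forall>w. 1 < w \<and> w \<le> u \<longrightarrow> 2 * w \<le> integral {0..w} (P (\<xi> u + 1))) \<and> 0 \<le> \<xi> u \<and> max 1 x \<le> u"
    by (intro eventually_conj HG_ev ev0 eventually_ge_at_top) auto
  then obtain u where H: "(\<forall>w. 1 < w \<and> w \<le> u \<longrightarrow> 2 * w \<le> integral {0..w} (P (\<xi> u + 1))) \<and> 0 \<le> \<xi> u \<and> max 1 x \<le> u"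
    unfolding eventually_at_top_linorder by blast
  have "exp (- (\<xi> u + 1) * x) \<le> \<sigma> x"
    by (rule LB[of u "\<xi> u + 1" x]) (use H assms in auto)
  moreover have "0 < exp (- (\<xi> u + 1) * x)" by simp
  ultimately show ?thesis by linarith
qed

lemma sigma_int_nat: "\<sigma> integrable_on {0..real n}"
proof (induction n)
  case 0
  then show ?case by (simp add: integrable_negligible)
next
  case (Suc n)
  have "\<sigma> integrable_on {real n..real n + 1}" by (rule sigma_int_unit) simp
  then show ?case using Suc Henstock_Kurzweil_Integration.integrable_combine[of 0 "real n" "real n + 1" \<sigma>]
    by (simp add: add.commute)
qed

lemma sigma_int: assumes "0 \<le> U" shows "\<sigma> integrable_on {0..U}"
proof -
  obtain n :: nat where "U \<le> real n" using real_arch_simple by blast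
  then show ?thesis using sigma_int_nat[of n] by (rule_tac integrable_on_subinterval) auto
qed

lemma sigma_nn: "0 \<le> x \<Longrightarrow> 0 \<le> \<sigma> x"
  using sigma_pos less_imp_le by blast

lemma sigma_avg:
  assumes x: "1 < x"
  shows "x * \<sigma> x \<le> integral {0..x} \<sigma>"
proof -
  have "(\<lambda>t. \<sigma> (x - t)) integrable_on {0..x}"
    using sigma_int[of x] x unfolding integrable_refl_shift by simp
  then have "integral {0..x} (\<lambda>t. \<sigma> (x - t) * chi t) \<le> integral {0..x} (\<lambda>t. \<sigma> (x - t))"
  proof (rule integral_le[rotated])
    show "(\<lambda>t. \<sigma> (x - t) * chi t) integrable_on {0..x}" using sigma_eq[OF x] by blast
    fix t assume t: "t \<in> {0..x}"
    then have "0 < \<sigma> (x - t)" "chi t \<le> 1" using sigma_pos chi_le1 by auto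
    then show "\<sigma> (x - t) * chi t \<le> \<sigma> (x - t)" by (simp add: mult_left_le)
  qed
  moreover have "integral {0..x} (\<lambda>t. \<sigma> (x - t) * chi t) = x * \<sigma> x"
    using sigma_eq[OF x] by (rule integral_unique)
  moreover have "integral {0..x} (\<lambda>t. \<sigma> (x - t)) = integral {0..x} \<sigma>"
    using integral_refl_shift[of 0 x \<sigma> x] by simp
  ultimately show ?thesis by simp
qed

lemma sigma_le1: assumes "0 \<le> x" shows "\<sigma> x \<le> 1"
proof -
  define U where "U = max 1 x"
  have U1: "1 \<le> U" and xU: "x \<le> U" by (auto simp: U_def)
  define M where "M = max 1 (integral {0..U} \<sigma>)"
  have bnd: "\<sigma> y \<le> M" if "y \<in> {0..U}" for y
  proof (cases "y \<le> 1")
    case True then show ?thesis using that sigma_init by (simp add: M_def)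
  next
    case False
    then have "y * \<sigma> y \<le> integral {0..y} \<sigma>" by (intro sigma_avg) simp
    also have "\<dots> \<le> integral {0..U} \<sigma>"
      by (rule integral_subset_le) (use that U1 in \<open>auto intro: sigma_int sigma_nn\<close>)
    finally have "y * \<sigma> y \<le> integral {0..U} \<sigma>" .
    moreover have "\<sigma> y \<le> y * \<sigma> y" using False sigma_pos[of y] by (simp add: mult_le_cancel_right1 less_imp_le)
    ultimately show ?thesis by (simp add: M_def)
  qed
  define B where "B = Sup (\<sigma> ` {0..U})"
  have bdd: "bdd_above (\<sigma> ` {0..U})" by (rule bdd_aboveI2[of _ _ M]) (rule bnd)
  have le_B: "\<sigma> y \<le> B" if "y \<in> {0..U}" for y
    unfolding B_def using bdd that by (rule cSUP_upper2) simp
  have "B \<le> 1"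
  proof (rule ccontr)
    assume B1: "\<not> B \<le> 1"
    have all: "\<sigma> y \<le> max 1 (B - (B - 1) / U)" if y: "y \<in> {0..U}" for y
    proof (cases "y \<le> 1")
      case True then show ?thesis using y sigma_init by simp
    next
      case False
      have i01: "integral {0..1} \<sigma> = 1"
      proof -
        have "integral {0..1} \<sigma> = integral {0..1} (\<lambda>t::real. 1::real)"
          by (rule integral_cong) (simp add: sigma_init)
        then show ?thesis by simp
      qed
      have i1y: "integral {1..y} \<sigma> \<le> (y - 1) * B"
      proof -
        have "integral {1..y} \<sigma> \<le> integral {1..y} (\<lambda>t::real. B)"
          by (rule integral_le) (use y le_B sigma_int[of y] False in \<open>auto intro: integrable_on_subinterval\<close>)
        then show ?thesis using False by simp
      qed
      have "integral {0..y} \<sigma> = integral {0..1} \<sigma> + integral {1..y} \<sigma>"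
        by (rule Henstock_Kurzweil_Integration.integral_combine[symmetric]) (use False in \<open>auto intro: sigma_int\<close>)
      then have "y * \<sigma> y \<le> 1 + (y - 1) * B" using sigma_avg[of y] False i01 i1y by simp
      then have "\<sigma> y \<le> (1 + (y - 1) * B) / y" using False by (simp add: field_simps)
      also have "\<dots> = B - (B - 1) / y" using False by (simp add: field_simps)
      also have "\<dots> \<le> B - (B - 1) / U"
      proof -
        have "(B - 1) / U \<le> (B - 1) / y" using B1 y False by (intro divide_left_mono) auto
        then show ?thesis by linarith
      qed
      finally show ?thesis by simp
    qed
    have "Sup (\<sigma> ` {0..U}) \<le> max 1 (B - (B - 1) / U)"
      by (rule cSUP_least) (use all U1 in auto)
    then have "B \<le> max 1 (B - (B - 1) / U)" by (simp only: B_def[symmetric])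
    moreover have "0 < (B - 1) / U" using B1 U1 by simp
    ultimately show False using B1 by linarith
  qed
  then show ?thesis using le_B[of x] assms xU by simp
qed

end

context L begin

lemma int_bound:
  assumes x: "1 < x" and A0: "0 \<le> A" and HA: "\<And>y. 0 \<le> y \<Longrightarrow> y \<le> x \<Longrightarrow> \<sigma> y * exp (s' * y) \<le> A"
  shows "x * \<sigma> x * exp (s * x) \<le> A * exp ((s - s') * x) * X s'"
proof -
  have h1: "((\<lambda>t. \<sigma> (x - t) * chi t * exp (s * x)) has_integral (x * \<sigma> x * exp (s * x))) {0..x}"
    using has_integral_mult_left[OF sigma_eq[OF x], of "exp (s * x)"] by simp
  have h2: "((\<lambda>t. A * exp ((s - s') * x) * P s' t) has_integral (A * exp ((s - s') * x) * integral {0..x} (P s'))) {0..x}"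
    using has_integral_mult_right[OF integrable_integral[OF P_int_Icc[of 0 s' x]], of "A * exp ((s - s') * x)"] by simp
  have "x * \<sigma> x * exp (s * x) \<le> A * exp ((s - s') * x) * integral {0..x} (P s')"
  proof (rule has_integral_le[OF h1 h2])
    fix t assume t: "t \<in> {0..x}"
    have "\<sigma> (x - t) * chi t * exp (s * x) = (\<sigma> (x - t) * exp (s' * (x - t))) * (P s' t * exp ((s - s') * x))"
      by (simp add: P_def algebra_simps flip: exp_add)
    also have "\<dots> \<le> A * (P s' t * exp ((s - s') * x))"
      using HA[of "x - t"] t P_nn[of t s'] by (intro mult_right_mono) auto
    finally show "\<sigma> (x - t) * chi t * exp (s * x) \<le> A * exp ((s - s') * x) * P s' t"
      by (simp add: algebra_simps)
  qed
  also have "\<dots> \<le> A * exp ((s - s') * x) * X s'"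
    using G_le_X[of 0 x s'] A0 by (intro mult_left_mono) auto
  finally show ?thesis .
qed

lemma UBstep:
  assumes s': "0 \<le> s'" "s' \<le> s" and R'0: "0 \<le> R'" and H': "\<And>y. 0 \<le> y \<Longrightarrow> \<sigma> y * exp (s' * y) \<le> R'"
    and R1: "exp s \<le> R" and R2: "R' * X s' * exp ((s - s') * (2 * X s + 1)) \<le> R"
    and y: "0 \<le> y"
  shows "\<sigma> y * exp (s * y) \<le> R"
proof -
  define U where "U = max 1 y"
  have U1: "1 \<le> U" and yU: "y \<le> U" by (auto simp: U_def)
  define f where "f z = \<sigma> z * exp (s * z)" for z
  have fb: "f z \<le> exp (s * U)" if "z \<in> {0..U}" for z
  proof -
    have "f z \<le> 1 * exp (s * z)" unfolding f_def using sigma_le1[of z] that by (intro mult_right_mono) auto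
    also have "\<dots> \<le> exp (s * U)" using that s' by (simp add: mult_left_mono)
    finally show ?thesis .
  qed
  define Bu where "Bu = Sup (f ` {0..U})"
  have bdd: "bdd_above (f ` {0..U})" by (rule bdd_aboveI2[of _ _ "exp (s * U)"]) (rule fb)
  have leB: "f z \<le> Bu" if "z \<in> {0..U}" for z
    unfolding Bu_def using bdd that by (rule cSUP_upper2) simp
  have Bu1: "1 \<le> Bu" using leB[of 0] U1 sigma_init[of 0] by (simp add: f_def)
  have Xs1: "1 \<le> X s" using s' by (intro X_ge1) simp
  have all: "f z \<le> max R (Bu / 2)" if z: "z \<in> {0..U}" for z
  proof (cases "z \<le> 1")
    case True
    then have "f z = exp (s * z)" using z sigma_init by (simp add: f_def)
    also have "\<dots> \<le> exp s" using True z s' by (simp add: mult_left_le)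
    finally show ?thesis using R1 by simp
  next
    case False
    then have z1: "1 < z" by simp
    have "0 \<le> f z" using z sigma_nn[of z] by (simp add: f_def)
    then have "1 * f z \<le> z * f z" using z1 by (intro mult_right_mono) auto
    then have fz: "f z \<le> z * f z" by simp
    show ?thesis
    proof (cases "z \<le> 2 * X s + 1")
      case True
      have "z * f z \<le> R' * exp ((s - s') * z) * X s'"
        unfolding f_def mult.assoc[symmetric] by (rule int_bound[OF z1 R'0 H'])
      also have "\<dots> = R' * X s' * exp ((s - s') * z)" by (simp add: algebra_simps)
      also have "\<dots> \<le> R' * X s' * exp ((s - s') * (2 * X s + 1))"
        using True s' R'0 X_ge1[of s'] by (intro mult_left_mono) (auto intro: mult_left_mono)
      finally show ?thesis using fz R2 by simp
    next
      case False
      have "z * f z \<le> Bu * exp ((s - s) * z) * X s"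
        unfolding f_def mult.assoc[symmetric]
        by (rule int_bound[OF z1]) (use Bu1 leB z in \<open>auto simp: f_def\<close>)
      then have "z * f z \<le> Bu * X s" by simp
      also have "\<dots> \<le> Bu * (z / 2)" using False Bu1 by (intro mult_left_mono) auto
      finally have "z * f z \<le> z * (Bu / 2)" by (simp add: algebra_simps)
      then have "f z \<le> Bu / 2" using z1 by simp
      then show ?thesis by simp
    qed
  qed
  have "Sup (f ` {0..U}) \<le> max R (Bu / 2)"
    by (rule cSUP_least) (use all U1 in auto)
  then have "Bu \<le> max R (Bu / 2)" by (simp only: Bu_def[symmetric])
  then have "Bu \<le> R" using Bu1 by (auto simp: max_def split: if_splits)
  then show ?thesis using leB[of y] y yU by (simp add: f_def)
qed

end

lemma geo_sum:
  fixes a :: real assumes a: "1 < a"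
  shows "(\<Sum>j<N. a ^ Suc j) \<le> a ^ N * (a / (a - 1))"
proof (induction N)
  case 0 then show ?case using a by simp
next
  case (Suc N)
  have "(\<Sum>j<Suc N. a ^ Suc j) = (\<Sum>j<N. a ^ Suc j) + a ^ Suc N" by simp
  also have "\<dots> \<le> a ^ N * (a / (a - 1)) + a ^ Suc N" using Suc by simp
  also have "\<dots> = a ^ Suc N * (a / (a - 1))" using a by (simp add: field_simps)
  finally show ?case .
qed

lemma key_ineq:
  fixes \<delta> t :: real assumes "0 < \<delta>" "0 < t"
  shows "\<delta> * (exp (\<delta> * t) / (exp (\<delta> * t) - 1)) \<le> 1 / t + \<delta>"
proof -
  define a where "a = exp (\<delta> * t)"
  have a1: "1 + \<delta> * t \<le> a" unfolding a_def by (rule exp_ge_add_one_self)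
  have apos: "a - 1 > 0" using a1 assms by (smt (verit) mult_pos_pos)
  have "\<delta> * (a / (a - 1)) = \<delta> + \<delta> / (a - 1)" using apos by (simp add: field_simps)
  moreover have "\<delta> / (a - 1) \<le> 1 / t"
    using apos assms a1 by (simp add: divide_simps mult.commute)
  ultimately show ?thesis unfolding a_def[symmetric] by linarith
qed

context L begin

lemma P_int_c: assumes "a \<ge> 0" shows "(\<lambda>t. c * P s t) integrable_on {a..}"
  using integrable_on_cmult_left[OF P_int_Ici[OF assms, of s], of c] by simp

lemma I01: assumes "0 \<le> s" shows "integral {0..1} (P s) \<le> exp s"
proof -
  have "integral {0..1} (P s) \<le> integral {0..1} (\<lambda>t::real. exp s)"
  proof (rule integral_le)
    fix t :: real assume t: "t \<in> {0..1}"
    have "P s t \<le> exp (s * t)" using P_le t by auto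
    moreover have "s * t \<le> s * 1" using t assms by (intro mult_left_mono) auto
    ultimately show "P s t \<le> exp s" by (smt (verit, best) exp_le_cancel_iff mult.right_neutral)
  qed (auto intro: P_int_Icc)
  then show ?thesis by simp
qed

lemma grid:
  assumes \<delta>: "\<delta> > 0" and y: "0 \<le> y"
  shows "\<sigma> y * exp ((real n * \<delta>) * y) \<le>
     exp (real n * \<delta> + (\<Sum>j<n. ln (X (real j * \<delta>)) + \<delta> * (2 * X (real (Suc j) * \<delta>) + 1)))"
  using y
proof (induction n arbitrary: y)
  case 0
  then show ?case using sigma_le1 by simp
next
  case (Suc n)
  define T where "T j = ln (X (real j * \<delta>)) + \<delta> * (2 * X (real (Suc j) * \<delta>) + 1)" for j
  have T0: "0 \<le> T j" for j
  proof -
    have "1 \<le> X (real j * \<delta>)" "1 \<le> X (real (Suc j) * \<delta>)" using \<delta> by (auto intro!: X_ge1)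
    then show ?thesis unfolding T_def using \<delta> by (auto intro!: add_nonneg_nonneg)
  qed
  have Xp: "0 < X (real n * \<delta>)" using X_ge1[of "real n * \<delta>"] \<delta> by simp
  show ?case unfolding T_def[symmetric]
  proof (rule UBstep[where s' = "real n * \<delta>" and R' = "exp (real n * \<delta> + (\<Sum>j<n. T j))"])
    show "0 \<le> real n * \<delta>" "real n * \<delta> \<le> real (Suc n) * \<delta>" using \<delta> by auto
    show "0 \<le> exp (real n * \<delta> + (\<Sum>j<n. T j))" by simp
    show "\<sigma> z * exp (real n * \<delta> * z) \<le> exp (real n * \<delta> + (\<Sum>j<n. T j))" if "0 \<le> z" for z
      using Suc.IH[OF that] unfolding T_def .
    have "0 \<le> (\<Sum>j<Suc n. T j)" by (intro sum_nonneg T0)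
    then show "exp (real (Suc n) * \<delta>) \<le> exp (real (Suc n) * \<delta> + (\<Sum>j<Suc n. T j))" by simp
    have "exp (real n * \<delta> + (\<Sum>j<n. T j)) * X (real n * \<delta>) * exp ((real (Suc n) * \<delta> - real n * \<delta>) * (2 * X (real (Suc n) * \<delta>) + 1))
        = exp (real n * \<delta> + (\<Sum>j<n. T j) + ln (X (real n * \<delta>)) + \<delta> * (2 * X (real (Suc n) * \<delta>) + 1))"
      using Xp by (simp add: exp_add algebra_simps)
    also have "\<dots> = exp (real n * \<delta> + (\<Sum>j<Suc n. T j))" by (simp add: T_def algebra_simps)
    also have "\<dots> \<le> exp (real (Suc n) * \<delta> + (\<Sum>j<Suc n. T j))" using \<delta> by simp
    finally show "exp (real n * \<delta> + (\<Sum>j<n. T j)) * X (real n * \<delta>) * exp ((real (Suc n) * \<delta> - real n * \<delta>) * (2 * X (real (Suc n) * \<delta>) + 1))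
        \<le> exp (real (Suc n) * \<delta> + (\<Sum>j<Suc n. T j))" .
  qed (use Suc.prems in simp)
qed

lemma sumX:
  assumes \<delta>: "\<delta> > 0"
  shows "(\<Sum>j<N. \<delta> * X (real (Suc j) * \<delta>)) \<le>
     real N * \<delta> * exp (real N * \<delta>) + integral {1..} (\<lambda>t. P (real N * \<delta>) t / t) + \<delta> * X1 (real N * \<delta>)"
proof -
  have a: "(\<Sum>j<N. \<delta> * integral {0..1} (P (real (Suc j) * \<delta>))) \<le> (\<Sum>j<N. \<delta> * exp (real N * \<delta>))"
  proof (rule sum_mono)
    fix j assume j: "j \<in> {..<N}"
    have "integral {0..1} (P (real (Suc j) * \<delta>)) \<le> exp (real (Suc j) * \<delta>)" using \<delta> by (intro I01) simp
    also have "\<dots> \<le> exp (real N * \<delta>)" using j \<delta> by (simp add: Suc_le_eq)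
    finally show "\<delta> * integral {0..1} (P (real (Suc j) * \<delta>)) \<le> \<delta> * exp (real N * \<delta>)" using \<delta> by simp
  qed
  have b: "(\<Sum>j<N. \<delta> * X1 (real (Suc j) * \<delta>)) = integral {1..} (\<lambda>t. \<Sum>j<N. \<delta> * P (real (Suc j) * \<delta>) t)"
    unfolding X1_def by (subst integral_sum) (auto intro!: P_int_c simp: sum_distrib_left)
  have c: "integral {1..} (\<lambda>t. \<Sum>j<N. \<delta> * P (real (Suc j) * \<delta>) t) \<le>
      integral {1..} (\<lambda>t. P (real N * \<delta>) t / t + \<delta> * P (real N * \<delta>) t)"
  proof (rule integral_le)
    show "(\<lambda>t. \<Sum>j<N. \<delta> * P (real (Suc j) * \<delta>) t) integrable_on {1..}"
      by (intro integrable_sum P_int_c) auto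
    show "(\<lambda>t. P (real N * \<delta>) t / t + \<delta> * P (real N * \<delta>) t) integrable_on {1..}"
      by (intro integrable_add P_int_c Pd_int) auto
    fix t :: real assume t: "t \<in> {1..}"
    define a where "a = exp (\<delta> * t)"
    have a1: "1 < a" using t \<delta> by (simp add: a_def)
    have pw: "exp (real k * \<delta> * t) = a ^ k" for k
      unfolding a_def by (simp add: exp_of_nat_mult[symmetric] algebra_simps)
    have "(\<Sum>j<N. \<delta> * P (real (Suc j) * \<delta>) t) = \<delta> * chi t * (\<Sum>j<N. a ^ Suc j)"
      unfolding P_def pw[symmetric] by (simp add: sum_distrib_left algebra_simps)
    also have "\<dots> \<le> \<delta> * chi t * (a ^ N * (a / (a - 1)))"
      using geo_sum[OF a1] \<delta> chi_nn[of t] t by (intro mult_left_mono) auto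
    also have "\<dots> = chi t * a ^ N * (\<delta> * (a / (a - 1)))" by (simp add: algebra_simps)
    also have "\<dots> \<le> chi t * a ^ N * (1 / t + \<delta>)"
      using key_ineq[OF \<delta>, of t] t chi_nn[of t] unfolding a_def by (intro mult_left_mono) auto
    also have "\<dots> = P (real N * \<delta>) t / t + \<delta> * P (real N * \<delta>) t"
      unfolding P_def pw by (simp add: algebra_simps)
    finally show "(\<Sum>j<N. \<delta> * P (real (Suc j) * \<delta>) t) \<le> P (real N * \<delta>) t / t + \<delta> * P (real N * \<delta>) t" .
  qed
  have d: "integral {1..} (\<lambda>t. P (real N * \<delta>) t / t + \<delta> * P (real N * \<delta>) t) =
     integral {1..} (\<lambda>t. P (real N * \<delta>) t / t) + \<delta> * X1 (real N * \<delta>)"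
    unfolding X1_def by (subst integral_add) (auto intro: P_int_c Pd_int)
  have "(\<Sum>j<N. \<delta> * X (real (Suc j) * \<delta>)) =
     (\<Sum>j<N. \<delta> * integral {0..1} (P (real (Suc j) * \<delta>))) + (\<Sum>j<N. \<delta> * X1 (real (Suc j) * \<delta>))"
    by (simp add: X_split sum.distrib algebra_simps)
  then show ?thesis using a b c d by simp
qed

end

context L begin

lemma J_small:
  assumes c: "c > 0"
  shows "\<forall>\<^sub>F u in at_top. integral {1..} (\<lambda>t. P (\<xi> u) t / t) \<le> c * u"
proof -
  define V where "V = max 1 (2 / c)"
  have V1: "V \<ge> 1" and Vc: "2 / c \<le> V" by (auto simp: V_def)
  have ev1: "\<forall>\<^sub>F u in at_top. \<bar>\<xi> u\<bar> \<le> (1 / (2 * V)) * ln u" by (rule xi_small_ev) (use V1 in simp)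
  have ev2: "\<forall>\<^sub>F u in at_top. max 1 ((2 * V / c)^2) \<le> u" by (rule eventually_ge_at_top)
  show ?thesis
  proof (rule eventually_mono[OF eventually_conj[OF ev1 ev2]])
    fix u assume U: "\<bar>\<xi> u\<bar> \<le> (1 / (2 * V)) * ln u \<and> max 1 ((2 * V / c)^2) \<le> u"
    then have u1: "1 \<le> u" by simp
    have sq: "exp (\<bar>\<xi> u\<bar> * V) \<le> sqrt u"
    proof -
      have "\<bar>\<xi> u\<bar> * V \<le> (1 / (2 * V)) * ln u * V" using U V1 by (intro mult_right_mono) auto
      also have "\<dots> = ln (sqrt u)" using V1 u1 by (simp add: ln_sqrt)
      finally have "exp (\<bar>\<xi> u\<bar> * V) \<le> exp (ln (sqrt u))" by simp
      then show ?thesis using u1 by simp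
    qed
    have Vsq: "V * sqrt u \<le> c / 2 * u"
    proof -
      have s: "2 * V / c \<le> sqrt u" by (rule real_le_rsqrt) (use U in simp)
      then have "V \<le> c / 2 * sqrt u" using c by (simp add: field_simps)
      then have "V * sqrt u \<le> (c / 2 * sqrt u) * sqrt u" using u1 by (intro mult_right_mono) auto
      also have "\<dots> = c / 2 * u" using u1 by (simp add: algebra_simps)
      finally show ?thesis .
    qed
    have split: "integral {1..} (\<lambda>t. P (\<xi> u) t / t) =
        integral {1..V} (\<lambda>t. P (\<xi> u) t / t) + integral {V..} (\<lambda>t. P (\<xi> u) t / t)"
      by (rule integral_unique[OF has_integral_split_inf]) (use V1 in \<open>auto intro: Pd_int\<close>)
    have head: "integral {1..V} (\<lambda>t. P (\<xi> u) t / t) \<le> V * sqrt u"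
    proof -
      have "integral {1..V} (\<lambda>t. P (\<xi> u) t / t) \<le> integral {1..V} (\<lambda>t::real. exp (\<bar>\<xi> u\<bar> * V))"
      proof (rule integral_le)
        fix t assume t: "t \<in> {1..V}"
        have "P (\<xi> u) t / t \<le> P (\<xi> u) t" using t P_nn[of t "\<xi> u"] by (simp add: divide_le_eq mult_le_cancel_left1)
        also have "\<dots> \<le> exp (\<xi> u * t)" using P_le t by auto
        also have "\<xi> u * t \<le> \<bar>\<xi> u\<bar> * V"
          using t by (meson abs_ge_self abs_ge_zero atLeastAtMost_iff mult_mono order_trans zero_le_one)
        then have "exp (\<xi> u * t) \<le> exp (\<bar>\<xi> u\<bar> * V)" by simp
        finally show "P (\<xi> u) t / t \<le> exp (\<bar>\<xi> u\<bar> * V)" .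
      qed (auto intro: Pd_int)
      also have "\<dots> = (V - 1) * exp (\<bar>\<xi> u\<bar> * V)" using V1 by simp
      also have "\<dots> \<le> V * exp (\<bar>\<xi> u\<bar> * V)" by (simp add: algebra_simps)
      also have "\<dots> \<le> V * sqrt u" using sq V1 by (intro mult_left_mono) auto
      finally show ?thesis .
    qed
    have tail: "integral {V..} (\<lambda>t. P (\<xi> u) t / t) \<le> u / V"
    proof -
      have "integral {V..} (\<lambda>t. P (\<xi> u) t / t) \<le> integral {V..} (\<lambda>t. (1 / V) * P (\<xi> u) t)"
      proof (rule integral_le)
        fix t assume t: "t \<in> {V..}"
        show "P (\<xi> u) t / t \<le> (1 / V) * P (\<xi> u) t"
          using t V1 P_nn[of t "\<xi> u"] by (simp add: divide_simps mult_left_mono)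
      qed (use V1 in \<open>auto intro: Pd_int P_int_c P_int_Ici\<close>)
      also have "\<dots> = (1 / V) * integral {V..} (P (\<xi> u))" 
      proof -
        have "P (\<xi> u) integrable_on {V..}" using V1 by (intro P_int_Ici) simp
        then show ?thesis by simp
      qed
      also have "integral {V..} (P (\<xi> u)) \<le> integral {1..} (P (\<xi> u))"
        by (rule integral_subset_le) (use V1 in \<open>auto intro: P_int_Ici P_nn\<close>)
      also have "\<dots> = u" using X1_xi[of u] u1 by (simp add: X1_def)
      finally show ?thesis using V1 by (simp add: divide_right_mono)
    qed
    have "u / V \<le> c / 2 * u"
    proof -
      have pos: "0 < V * (2 / c)" using V1 c by simp
      have "u / V \<le> u / (2 / c)" using divide_left_mono[OF Vc _ pos, of u] u1 by simp
      then show ?thesis by (simp add: field_simps)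
    qed
    then show "integral {1..} (\<lambda>t. P (\<xi> u) t / t) \<le> c * u" using split head tail Vsq by linarith
  qed
qed

end

context L begin

lemma ev_small:
  assumes "f \<in> o(\<lambda>u::real. u)" "c > 0"
  shows "\<forall>\<^sub>F u in at_top. f u \<le> c * u"
proof -
  have "\<forall>\<^sub>F u in at_top. norm (f u) \<le> c * norm u" using landau_o.smallD[OF assms] .
  then show ?thesis
  proof (rule eventually_mono[OF eventually_conj[OF _ eventually_ge_at_top[of 0]]])
    fix u :: real assume "norm (f u) \<le> c * norm u \<and> 0 \<le> u"
    then show "f u \<le> c * u" by (metis abs_ge_self abs_of_nonneg order.trans real_norm_def)
  qed
qed

lemma UB_ev:
  assumes \<delta>: "0 < \<delta>" "\<delta> \<le> 1"
  shows "\<forall>\<^sub>F u in at_top. ln (\<sigma> u) \<le> - \<xi> u * u + 8 * \<delta> * u"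
proof -
  have o1: "(\<lambda>u::real. ln u * ln (2 * u)) \<in> o(\<lambda>u. u)" by real_asymp
  have o2: "(\<lambda>u::real. ln u * sqrt u) \<in> o(\<lambda>u. u)" by real_asymp
  have o3: "(\<lambda>u::real. ln u) \<in> o(\<lambda>u. u)" by real_asymp
  have ev0: "\<forall>\<^sub>F u in at_top. 0 \<le> \<xi> u" using xi_top unfolding filterlim_at_top by blast
  have ev1: "\<forall>\<^sub>F u in at_top. ln u * ln (2 * u) \<le> (\<delta> * \<delta>) * u" using ev_small[OF o1] \<delta> by simp
  have ev2: "\<forall>\<^sub>F u in at_top. ln u * sqrt u \<le> \<delta> * u" using ev_small[OF o2] \<delta> by simp
  have ev3: "\<forall>\<^sub>F u in at_top. ln u \<le> \<delta> * u" using ev_small[OF o3] \<delta> by simp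
  have ev4: "\<forall>\<^sub>F u in at_top. \<bar>\<xi> u\<bar> \<le> (1/2) * ln u" by (rule xi_small_ev) simp
  have ev5: "\<forall>\<^sub>F u in at_top. integral {1..} (\<lambda>t. P (\<xi> u) t / t) \<le> \<delta> * u" by (rule J_small) (use \<delta> in simp)
  show ?thesis
  proof (rule eventually_mono[OF eventually_conj[OF ev0 eventually_conj[OF ev1 eventually_conj[OF ev2
        eventually_conj[OF ev3 eventually_conj[OF ev4 eventually_conj[OF ev5 eventually_ge_at_top[of 1]]]]]]]])
    fix u assume U: "0 \<le> \<xi> u \<and> ln u * ln (2 * u) \<le> (\<delta> * \<delta>) * u \<and> ln u * sqrt u \<le> \<delta> * u \<and>
      ln u \<le> \<delta> * u \<and> \<bar>\<xi> u\<bar> \<le> (1/2) * ln u \<and> integral {1..} (\<lambda>t. P (\<xi> u) t / t) \<le> \<delta> * u \<and> 1 \<le> u"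
    then have xi0: "0 \<le> \<xi> u" and u1: "1 \<le> u" and xil: "\<xi> u \<le> ln u / 2" and l1: "ln u \<le> \<delta> * u"
      and l2: "ln u * ln (2 * u) \<le> (\<delta> * \<delta>) * u" and l3: "ln u * sqrt u \<le> \<delta> * u"
      and Ju: "integral {1..} (\<lambda>t. P (\<xi> u) t / t) \<le> \<delta> * u" by auto
    have u0: "0 < u" using u1 by simp
    have sqe: "exp (\<xi> u) \<le> sqrt u"
    proof -
      have "exp (\<xi> u) \<le> exp (ln (sqrt u))" using xil u1 by (simp add: ln_sqrt)
      then show ?thesis using u1 by simp
    qed
    define N where "N = nat \<lfloor>\<xi> u / \<delta>\<rfloor>"
    define s where "s = real N * \<delta>"
    have RN: "real N = of_int \<lfloor>\<xi> u / \<delta>\<rfloor>" using xi0 \<delta> by (simp add: N_def)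
    have Nle: "real N \<le> \<xi> u / \<delta>" using RN by simp
    have Ngt: "\<xi> u / \<delta> - 1 < real N" using RN by linarith
    have sle: "s \<le> \<xi> u" using Nle \<delta> by (simp add: s_def field_simps)
    have sgt: "\<xi> u - \<delta> < s" using Ngt \<delta> by (simp add: s_def field_simps)
    have s0: "0 \<le> s" using \<delta> by (simp add: s_def)
    define T where "T j = ln (X (real j * \<delta>)) + \<delta> * (2 * X (real (Suc j) * \<delta>) + 1)" for j
    have gr: "\<sigma> u * exp (s * u) \<le> exp (s + (\<Sum>j<N. T j))"
      using grid[OF \<delta>(1), of u N] u1 by (simp add: s_def T_def)
    have spos: "0 < \<sigma> u" using sigma_pos u1 by simp
    have lnle: "ln (\<sigma> u) + s * u \<le> s + (\<Sum>j<N. T j)"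
    proof -
      have "ln (\<sigma> u * exp (s * u)) \<le> ln (exp (s + (\<Sum>j<N. T j)))"
        using gr spos by (subst ln_le_cancel_iff) auto
      then show ?thesis using spos by (simp add: ln_mult)
    qed
    have Tsum: "(\<Sum>j<N. T j) = (\<Sum>j<N. ln (X (real j * \<delta>))) + 2 * (\<Sum>j<N. \<delta> * X (real (Suc j) * \<delta>)) + real N * \<delta>"
      by (simp add: T_def sum.distrib sum_distrib_left algebra_simps)
    have b1: "(\<Sum>j<N. ln (X (real j * \<delta>))) \<le> real N * ln (2 * u)"
    proof -
      have "(\<Sum>j<N. ln (X (real j * \<delta>))) \<le> of_nat (card {..<N}) * ln (2 * u)"
      proof (rule sum_bounded_above)
        fix j assume j: "j \<in> {..<N}"
        have "real j * \<delta> \<le> s" using j \<delta> by (simp add: s_def)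
        then have "X (real j * \<delta>) \<le> X (\<xi> u)" using sle by (intro X_mono) simp
        also have "\<dots> \<le> exp \<bar>\<xi> u\<bar> + u" using u0 by (rule X_xi)
        also have "\<dots> \<le> 2 * u"
        proof -
          have "sqrt u * 1 \<le> sqrt u * sqrt u" using real_sqrt_ge_one[OF u1] by (intro mult_left_mono) auto
          then have "sqrt u \<le> u" using u1 by simp
          then show ?thesis using sqe xi0 by simp
        qed
        finally have "X (real j * \<delta>) \<le> 2 * u" .
        moreover have "0 < X (real j * \<delta>)" using X_ge1[of "real j * \<delta>"] \<delta> by simp
        ultimately show "ln (X (real j * \<delta>)) \<le> ln (2 * u)" by simp
      qed
      then show ?thesis by simp
    qed
    have b1': "real N * ln (2 * u) \<le> \<delta> * u / 2"
    proof -
      have ln2: "0 \<le> ln (2 * u)" using u1 by simp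
      have "real N * ln (2 * u) \<le> (\<xi> u / \<delta>) * ln (2 * u)" using Nle ln2 by (intro mult_right_mono)
      also have "\<dots> \<le> (ln u / 2 / \<delta>) * ln (2 * u)" using xil \<delta> ln2 by (intro mult_right_mono divide_right_mono) auto
      also have "\<dots> = (ln u * ln (2 * u)) / (2 * \<delta>)" by simp
      also have "\<dots> \<le> ((\<delta> * \<delta>) * u) / (2 * \<delta>)" using l2 \<delta> by (intro divide_right_mono) auto
      also have "\<dots> = \<delta> * u / 2" using \<delta> by simp
      finally show ?thesis .
    qed
    have b2: "(\<Sum>j<N. \<delta> * X (real (Suc j) * \<delta>)) \<le> 5/2 * \<delta> * u"
    proof -
      have "(\<Sum>j<N. \<delta> * X (real (Suc j) * \<delta>)) \<le>
          s * exp s + integral {1..} (\<lambda>t. P s t / t) + \<delta> * X1 s"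
        using sumX[OF \<delta>(1), of N] by (simp add: s_def)
      moreover have "s * exp s \<le> \<delta> * u / 2"
      proof -
        have "s * exp s \<le> (ln u / 2) * sqrt u"
          using sle xil sqe s0 by (intro mult_mono) (auto simp: order.trans[OF _ sqe])
        then show ?thesis using l3 by simp
      qed
      moreover have "integral {1..} (\<lambda>t. P s t / t) \<le> integral {1..} (\<lambda>t. P (\<xi> u) t / t)"
      proof (rule integral_le)
        fix t :: real assume t: "t \<in> {1..}"
        have "P s t \<le> P (\<xi> u) t" unfolding P_def using t sle chi_nn[of t]
          by (intro mult_left_mono) (auto intro: mult_right_mono)
        then show "P s t / t \<le> P (\<xi> u) t / t" using t by (simp add: divide_right_mono)
      qed (auto intro: Pd_int)
      moreover have "X1 s \<le> u" using X1_mono[OF sle] X1_xi[OF u0] by simp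
      then have "\<delta> * X1 s \<le> \<delta> * u" using \<delta> by simp
      ultimately show ?thesis using Ju by simp
    qed
    have su: "(\<xi> u - \<delta>) * u \<le> s * u" using sgt u1 by (intro mult_right_mono) auto
    define D where "D = \<delta> * u"
    define SL where "SL = (\<Sum>j<N. ln (X (real j * \<delta>)))"
    define SX where "SX = (\<Sum>j<N. \<delta> * X (real (Suc j) * \<delta>))"
    have "0 \<le> D" using \<delta> u1 by (simp add: D_def)
    have su': "\<xi> u * u - D \<le> s * u" using su by (simp add: algebra_simps D_def)
    have sdu: "s \<le> D / 2" using sle xil l1 unfolding D_def by linarith
    have T2: "(\<Sum>j<N. T j) = SL + 2 * SX + s" using Tsum by (simp add: SL_def SX_def s_def)
    have SLb: "SL \<le> D / 2" using b1 b1' unfolding SL_def D_def by linarith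
    have SXb: "SX \<le> 5/2 * D" using b2 unfolding SX_def D_def by simp
    have "ln (\<sigma> u) \<le> - (\<xi> u * u) + 8 * D" using lnle T2 SLb SXb su' sdu \<open>0 \<le> D\<close> by linarith
    then show "ln (\<sigma> u) \<le> - \<xi> u * u + 8 * \<delta> * u" by (simp add: D_def)
  qed
qed

lemma main_L:
  shows "(\<lambda>u. integral {1..} (\<lambda>v. chi v * exp (\<xi> u * v) / v)) \<in> o[at_top](\<lambda>u. u)
     \<and> (\<exists>e :: real \<Rightarrow> real. (e \<longlongrightarrow> 0) at_top \<and>
          (\<forall>\<^sub>F u in at_top. \<sigma> u = exp ((- \<xi> u + e u) * u)))"
proof
  show "(\<lambda>u. integral {1..} (\<lambda>v. chi v * exp (\<xi> u * v) / v)) \<in> o[at_top](\<lambda>u. u)"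
  proof (rule landau_o.smallI)
    fix c :: real assume c: "0 < c"
    show "\<forall>\<^sub>F u in at_top. norm (integral {1..} (\<lambda>v. chi v * exp (\<xi> u * v) / v)) \<le> c * norm u"
    proof (rule eventually_mono[OF eventually_conj[OF J_small[OF c] eventually_ge_at_top[of 0]]])
      fix u :: real assume H: "integral {1..} (\<lambda>t. P (\<xi> u) t / t) \<le> c * u \<and> 0 \<le> u"
      have "0 \<le> integral {1..} (\<lambda>t. P (\<xi> u) t / t)"
        by (rule integral_nonneg) (auto intro!: Pd_int divide_nonneg_nonneg P_nn)
      then show "norm (integral {1..} (\<lambda>v. chi v * exp (\<xi> u * v) / v)) \<le> c * norm u"
        using H by (simp add: P_def)
    qed
  qed
  define e where "e u = ln (\<sigma> u) / u + \<xi> u" for u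
  show "\<exists>e :: real \<Rightarrow> real. (e \<longlongrightarrow> 0) at_top \<and> (\<forall>\<^sub>F u in at_top. \<sigma> u = exp ((- \<xi> u + e u) * u))"
  proof (intro exI[of _ e] conjI)
    show "(e \<longlongrightarrow> 0) at_top"
    proof (rule tendstoI)
      fix d :: real assume d: "0 < d"
      define \<epsilon> where "\<epsilon> = min 1 (d / 2)"
      define \<delta> where "\<delta> = min 1 (d / 16)"
      have \<epsilon>: "0 < \<epsilon>" "\<epsilon> \<le> 1" "\<epsilon> < d" using d by (auto simp: \<epsilon>_def)
      have \<delta>: "0 < \<delta>" "\<delta> \<le> 1" "8 * \<delta> < d" using d by (auto simp: \<delta>_def)
      show "\<forall>\<^sub>F u in at_top. dist (e u) 0 < d"
      proof (rule eventually_mono[OF eventually_conj[OF LB_ev[OF \<epsilon>(1,2)] eventually_conj[OF UB_ev[OF \<delta>(1,2)] eventually_ge_at_top[of 1]]]])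
        fix u assume H: "exp (- (\<xi> u + \<epsilon>) * u) \<le> \<sigma> u \<and> ln (\<sigma> u) \<le> - \<xi> u * u + 8 * \<delta> * u \<and> 1 \<le> u"
        then have u1: "1 \<le> u" by simp
        have "- (\<xi> u + \<epsilon>) * u \<le> ln (\<sigma> u)"
          using H by (metis exp_gt_zero exp_le_cancel_iff exp_ln less_le_trans)
        then have lo: "- (\<xi> u + \<epsilon>) \<le> ln (\<sigma> u) / u" using u1 by (simp add: field_simps)
        have "ln (\<sigma> u) / u \<le> (- \<xi> u * u + 8 * \<delta> * u) / u" using H u1 by (simp add: divide_right_mono)
        also have "\<dots> = - \<xi> u + 8 * \<delta>" using u1 by (simp add: field_simps)
        finally have hi: "ln (\<sigma> u) / u \<le> - \<xi> u + 8 * \<delta>" .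
        show "dist (e u) 0 < d" using lo hi \<epsilon> \<delta> by (simp add: e_def dist_real_def abs_less_iff)
      qed
    qed
    show "\<forall>\<^sub>F u in at_top. \<sigma> u = exp ((- \<xi> u + e u) * u)"
    proof (rule eventually_mono[OF eventually_ge_at_top[of 1]])
      fix u :: real assume u1: "1 \<le> u"
      have "(- \<xi> u + e u) * u = ln (\<sigma> u)" using u1 by (simp add: e_def field_simps)
      then show "\<sigma> u = exp ((- \<xi> u + e u) * u)" using sigma_pos[of u] u1 by simp
    qed
  qed
qed

end

lemma cond_i_false:
  fixes chi \<xi> :: "real \<Rightarrow> real"
  assumes meas: "set_borel_measurable lborel {0..} chi"
    and chi_one: "\<And>t. 0 \<le> t \<Longrightarrow> t \<le> 1 \<Longrightarrow> chi t = 1"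
    and chi_bnd: "\<And>t. t > 1 \<Longrightarrow> 0 \<le> chi t \<and> chi t \<le> 1"
    and xi_def: "\<And>u. u > 0 \<Longrightarrow> ((\<lambda>v. chi v * exp (\<xi> u * v)) has_integral u) {1..}"
    and xi_small: "\<xi> \<in> o[at_top](\<lambda>u. ln u)"
    and ci: "cond_i chi"
  shows False
proof -
  obtain T where T1: "T > 1" and T0: "tail_nn chi T = 0" and "\<forall>t. 0 \<le> t \<and> t < T \<longrightarrow> tail_nn chi t \<noteq> 0"
    using ci unfolding cond_i_def by blast
  have m[measurable]: "(\<lambda>x. indicator {0..} x *\<^sub>R chi x) \<in> borel_measurable borel"
    using meas unfolding set_borel_measurable_def by simp
  define f where "f s = ennreal (indicator {0..} s *\<^sub>R chi s) * indicator {T..} s" for s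
  have fm: "f \<in> borel_measurable lborel" unfolding f_def by measurable
  have "tail_nn chi T = integral\<^sup>N lborel f"
    unfolding tail_nn_def f_def
    by (rule nn_integral_cong) (use T1 in \<open>auto simp: indicator_def\<close>)
  then have "AE s in lborel. f s = 0" using T0 nn_integral_0_iff_AE[OF fm] by simp
  then have "AE s in lborel. T \<le> s \<longrightarrow> chi s = 0"
  proof (rule eventually_mono)
    fix s assume fs: "f s = 0"
    show "T \<le> s \<longrightarrow> chi s = 0"
    proof
      assume Ts: "T \<le> s"
      then have "ennreal (chi s) = 0" using fs T1 by (simp add: f_def indicator_def)
      then have "chi s \<le> 0" by (simp only: ennreal_eq_0_iff)
      moreover have "0 \<le> chi s" using chi_bnd[of s] Ts T1 by simp
      ultimately show "chi s = 0" by simp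
    qed
  qed
  then obtain N where N: "{x \<in> space lborel. \<not> (T \<le> x \<longrightarrow> chi x = 0)} \<subseteq> N" "emeasure lborel N = 0" "N \<in> sets lborel"
    by (rule AE_E)
  have negN: "negligible N"
    unfolding negligible_iff_null_sets using N by (intro null_sets_completionI null_setsI) auto
  have bound: "u \<le> (T - 1) * exp (\<bar>\<xi> u\<bar> * T)" if u0: "u > 0" for u
  proof -
    define g where "g v = (if v \<in> {1..T} then chi v * exp (\<xi> u * v) else 0)" for v
    have "(g has_integral u) {1..}"
    proof (rule has_integral_spike[OF negN _ xi_def[OF u0]])
      fix v assume v: "v \<in> {1..} - N"
      show "g v = chi v * exp (\<xi> u * v)"
      proof (cases "v \<le> T")
        case True then show ?thesis using v by (simp add: g_def)
      next
        case False
        have "v \<notin> N" using v by simp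
        then have "v \<notin> {x. T \<le> x \<and> chi x \<noteq> 0}" using N(1) by auto
        then have "chi v = 0" using False by simp
        then show ?thesis using False by (simp add: g_def)
      qed
    qed
    then have hi: "((\<lambda>v. chi v * exp (\<xi> u * v)) has_integral u) {1..T}"
      unfolding g_def by (subst has_integral_restrict[symmetric]) auto
    have "u \<le> (T - 1) * exp (\<bar>\<xi> u\<bar> * T)"
    proof (rule has_integral_le[OF hi])
      show "((\<lambda>v::real. exp (\<bar>\<xi> u\<bar> * T)) has_integral (T - 1) * exp (\<bar>\<xi> u\<bar> * T)) {1..T}"
        using has_integral_const_real[of "exp (\<bar>\<xi> u\<bar> * T)" 1 T] T1 by simp
      fix v assume v: "v \<in> {1..T}"
      have c01: "0 \<le> chi v" "chi v \<le> 1" using chi_bnd[of v] chi_one[of v] v by (cases "v = 1"; auto)+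
      have "\<xi> u * v \<le> \<bar>\<xi> u\<bar> * v" using v by (intro mult_right_mono) auto
      also have "\<dots> \<le> \<bar>\<xi> u\<bar> * T" using v by (intro mult_left_mono) auto
      finally have "exp (\<xi> u * v) \<le> exp (\<bar>\<xi> u\<bar> * T)" by simp
      then show "chi v * exp (\<xi> u * v) \<le> exp (\<bar>\<xi> u\<bar> * T)"
        using c01 by (meson exp_ge_zero mult_left_le_one_le order.trans)
    qed
    then show ?thesis .
  qed
  have ev1: "\<forall>\<^sub>F u in at_top. norm (\<xi> u) \<le> (1 / (2 * T)) * norm (ln u)"
    by (rule landau_o.smallD[OF xi_small]) (use T1 in simp)
  have ev2: "\<forall>\<^sub>F u in at_top. max 1 ((T - 1)^2 + 1) \<le> u" by (rule eventually_ge_at_top)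
  obtain u where U: "norm (\<xi> u) \<le> (1 / (2 * T)) * norm (ln u)" "max 1 ((T - 1)^2 + 1) \<le> u"
    using eventually_conj[OF ev1 ev2] unfolding eventually_at_top_linorder by blast
  have u1: "1 \<le> u" using U(2) max.bounded_iff by blast
  have "\<bar>\<xi> u\<bar> * T \<le> (1 / (2 * T)) * ln u * T" using U u1 T1 by (intro mult_right_mono) auto
  also have "\<dots> = ln (sqrt u)" using T1 u1 by (simp add: ln_sqrt)
  finally have "exp (\<bar>\<xi> u\<bar> * T) \<le> exp (ln (sqrt u))" by simp
  then have sq: "exp (\<bar>\<xi> u\<bar> * T) \<le> sqrt u" using u1 by simp
  have "sqrt u * sqrt u \<le> (T - 1) * sqrt u"
    using bound[of u] u1 sq T1 by (simp add: order.trans[OF _ mult_left_mono])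
  then have "sqrt u \<le> T - 1" using u1 by (intro mult_right_le_imp_le[of "sqrt u" "sqrt u"]) auto
  then have "sqrt u * sqrt u \<le> (T - 1) * (T - 1)" using u1 T1 by (intro mult_mono) auto
  then have "u \<le> (T - 1)^2" using u1 by (simp add: power2_eq_square)
  then show False using U by simp
qed

theorem lemma6p1:
  fixes chi \<xi> \<sigma> :: "real \<Rightarrow> real"
  assumes meas: "set_borel_measurable lborel {0..} chi"
    and chi_one: "\<And>t. 0 \<le> t \<Longrightarrow> t \<le> 1 \<Longrightarrow> chi t = 1"
    and chi_bnd: "\<And>t. t > 1 \<Longrightarrow> 0 \<le> chi t \<and> chi t \<le> 1"
    and cond: "cond_i chi \<or> cond_ii chi"
    and xi_def: "\<And>u. u > 0 \<Longrightarrow> ((\<lambda>v. chi v * exp (\<xi> u * v)) has_integral u) {1..}"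
    and sigma_init: "\<And>u. 0 \<le> u \<Longrightarrow> u \<le> 1 \<Longrightarrow> \<sigma> u = 1"
    and sigma_eq: "\<And>u. u > 1 \<Longrightarrow> ((\<lambda>t. \<sigma> (u - t) * chi t) has_integral (u * \<sigma> u)) {0..u}"
    and xi_small: "\<xi> \<in> o[at_top](\<lambda>u. ln u)"
  shows "(\<lambda>u. integral {1..} (\<lambda>v. chi v * exp (\<xi> u * v) / v)) \<in> o[at_top](\<lambda>u. u)
     \<and> (\<exists>e :: real \<Rightarrow> real. (e \<longlongrightarrow> 0) at_top \<and>
          (\<forall>\<^sub>F u in at_top. \<sigma> u = exp ((- \<xi> u + e u) * u)))"
proof (cases "cond_i chi")
  case True
  then show ?thesis using cond_i_false[OF meas chi_one chi_bnd xi_def xi_small] by blast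
next
  case False
  then have "cond_ii chi" using cond by blast
  then obtain h e :: "real \<Rightarrow> real" where he: "mono_on {0..} h" "filterlim h at_top at_top"
      "(e \<longlongrightarrow> 0) at_top" "\<forall>\<^sub>F t in at_top. chi t = ((1 + e t) / h t) powr t"
    unfolding cond_ii_def by blast
  interpret L chi \<xi> \<sigma> h e
    by (unfold_locales; fact assms he)
  show ?thesis by (rule main_L)
qed


end
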